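(* Let $k\ge2$, $n\ge1$, $1\le p\le n$. If $k-1$ does not divide $n-p$ then $u_{n,p}(\mathbf e_k)=0$. If $k-1$ divides $n-p$, put $m=\frac{n-p}{k-1}$; then $$u_{n,p}(\mathbf e_k)=\frac{(n-1)!}{p!}\Big[\frac{n}{(k-1)!}\Big]^{m}\sum_{q=0}^{p}\binom{p}{q}\frac{p+(k-1)q}{(m-q)!}\Big(\frac{1-k}{kn}\Big)^q,$$ with the convention $1/(m-q)!=0$ for $q>m$.
   Context: $\mathcal K_n^{(k)}$ is the $k$-uniform complete hypergraph on vertex set $\{1,\dots,n\}$ (hyperedges: all $k$-element subsets). A cycle is a sequence $(v_0,e_1,v_1,\dots,e_\ell,v_\ell)$ with $\ell\ge2$, $v_{i-1},v_i\in e_i$, $v_0,\dots,v_{\ell-1}$ distinct, $v_\ell=v_0$, and $e_1,\dots,e_\ell$ distinct. A spanning hyperforest is a set of hyperedges with no cycle; its components are the classes of vertices connected by walks (isolated vertices included). $u_{n,p}(\mathbf e_k)$ is the number of spanning hyperforests of $\mathcal K_n^{(k)}$ with exactly $p$ components. *)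

theory Defs
  imports Complex_Main
begin

definition hyperedges :: "nat \<Rightarrow> nat \<Rightarrow> nat set set" where
  "hyperedges n k = {e. e \<subseteq> {1..n} \<and> card e = k}"

text \<open>A cycle (v0,e1,v1,...,e_l,v_l=v0), l \<ge> 2, with distinct v0..v_(l-1) and
  distinct edges; 0-based: edge es!i contains vs!i and vs!((i+1) mod l).\<close>
definition has_cycle :: "nat set set \<Rightarrow> bool" where
  "has_cycle F \<longleftrightarrow> (\<exists>vs es. length vs = length es \<and> length vs \<ge> 2 \<and>
      distinct vs \<and> distinct es \<and> set es \<subseteq> F \<and>
      (\<forall>i < length vs. vs ! i \<in> es ! i \<and> vs ! ((i + 1) mod length vs) \<in> es ! i))"

definition adj :: "nat set set \<Rightarrow> (nat \<times> nat) set" where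
  "adj F = {(x, y). \<exists>e\<in>F. x \<in> e \<and> y \<in> e}"

definition components :: "nat \<Rightarrow> nat set set \<Rightarrow> nat set set" where
  "components n F = (\<lambda>x. {y \<in> {1..n}. (x, y) \<in> (adj F)\<^sup>*}) ` {1..n}"

definition spanning_hyperforests :: "nat \<Rightarrow> nat \<Rightarrow> nat \<Rightarrow> nat set set set" where
  "spanning_hyperforests n k p =
     {F. F \<subseteq> hyperedges n k \<and> \<not> has_cycle F \<and> card (components n F) = p}"

definition u :: "nat \<Rightarrow> nat \<Rightarrow> nat \<Rightarrow> nat" where
  "u n p k = card (spanning_hyperforests n k p)"

end

theory Submission
  imports Defs "HOL-Library.FuncSet"
begin

definition conn :: "nat set set \<Rightarrow> nat \<Rightarrow> nat \<Rightarrow> bool" where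
  "conn F x y \<longleftrightarrow> (x, y) \<in> (adj F)\<^sup>*"

lemma adj_sym: "(x,y) \<in> adj F \<Longrightarrow> (y,x) \<in> adj F"
  unfolding adj_def by auto

lemma conn_refl[simp]: "conn F x x" unfolding conn_def by simp

lemma conn_sym: "conn F x y \<Longrightarrow> conn F y x"
proof -
  have "sym (adj F)" unfolding sym_def using adj_sym by blast
  hence "sym ((adj F)\<^sup>*)" by (rule sym_rtrancl)
  thus "conn F x y \<Longrightarrow> conn F y x" unfolding conn_def sym_def by blast
qed

lemma conn_trans: "conn F x y \<Longrightarrow> conn F y z \<Longrightarrow> conn F x z"
  unfolding conn_def by (rule rtrancl_trans)

lemma conn_edge: "e \<in> F \<Longrightarrow> x \<in> e \<Longrightarrow> y \<in> e \<Longrightarrow> conn F x y"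
  unfolding conn_def adj_def by (rule r_into_rtrancl) auto

lemma conn_mono: "F \<subseteq> G \<Longrightarrow> conn F x y \<Longrightarrow> conn G x y"
proof -
  assume "F \<subseteq> G"
  hence "adj F \<subseteq> adj G" unfolding adj_def by auto
  thus "conn F x y \<Longrightarrow> conn G x y" unfolding conn_def using rtrancl_mono by blast
qed

lemma conn_empty: "conn {} x y \<longleftrightarrow> x = y"
  unfolding conn_def adj_def by simp

lemma conn_insert_D:
  assumes "conn (insert e F) x y"
  shows "conn F x y \<or> (\<exists>a\<in>e. \<exists>b\<in>e. conn F x a \<and> conn F b y)"
  using assms unfolding conn_def
proof (induction rule: rtrancl_induct)
  case base then show ?case by simp
next
  case (step y z)
  from step.hyps(2) obtain f where f: "f \<in> insert e F" "y \<in> f" "z \<in> f" unfolding adj_def by auto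
  show ?case
  proof (cases "f = e")
    case True
    with step.IH f show ?thesis by auto
  next
    case False
    with f have yz: "(y,z) \<in> adj F" unfolding adj_def by auto
    from step.IH show ?thesis
    proof
      assume "(x, y) \<in> (adj F)\<^sup>*" with yz show ?thesis by (meson rtrancl.rtrancl_into_rtrancl)
    next
      assume "\<exists>a\<in>e. \<exists>b\<in>e. (x, a) \<in> (adj F)\<^sup>* \<and> (b, y) \<in> (adj F)\<^sup>*"
      with yz show ?thesis by (meson rtrancl.rtrancl_into_rtrancl)
    qed
  qed
qed

lemma conn_insert:
  "conn (insert e F) x y \<longleftrightarrow> conn F x y \<or> (\<exists>a\<in>e. \<exists>b\<in>e. conn F x a \<and> conn F b y)"
proof
  assume "conn (insert e F) x y" thus "conn F x y \<or> (\<exists>a\<in>e. \<exists>b\<in>e. conn F x a \<and> conn F b y)"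
    by (rule conn_insert_D)
next
  assume h: "conn F x y \<or> (\<exists>a\<in>e. \<exists>b\<in>e. conn F x a \<and> conn F b y)"
  have m: "conn F u v \<Longrightarrow> conn (insert e F) u v" for u v by (rule conn_mono[of F]) auto
  show "conn (insert e F) x y"
    using h
  proof
    assume "conn F x y" thus ?thesis by (rule m)
  next
    assume "\<exists>a\<in>e. \<exists>b\<in>e. conn F x a \<and> conn F b y"
    then obtain a b where ab: "a \<in> e" "b \<in> e" "conn F x a" "conn F b y" by blast
    have "conn (insert e F) a b" by (rule conn_edge) (use ab in auto)
    thus ?thesis using ab m conn_trans by blast
  qed
qed

definition spath :: "nat set set \<Rightarrow> nat list \<Rightarrow> nat set list \<Rightarrow> bool" where
  "spath F vs es \<longleftrightarrow> length vs = Suc (length es) \<and> distinct vs \<and> distinct es \<and> set es \<subseteq> F \<and>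
     (\<forall>i<length es. vs ! i \<in> es ! i \<and> vs ! Suc i \<in> es ! i)"

lemma conn_spath:
  assumes "conn F a b"
  shows "\<exists>vs es. spath F vs es \<and> vs ! 0 = a \<and> vs ! length es = b"
  using assms unfolding conn_def
proof (induction rule: rtrancl_induct)
  case base
  show ?case by (rule exI[of _ "[a]"], rule exI[of _ "[]"]) (simp add: spath_def)
next
  case (step y z)
  from step.IH obtain vs es where p: "spath F vs es" "vs ! 0 = a" "vs ! length es = y" by blast
  from step.hyps(2) obtain f where f: "f \<in> F" "y \<in> f" "z \<in> f" unfolding adj_def by auto
  have L: "length vs = Suc (length es)" and dv: "distinct vs" and de: "distinct es"
    and sF: "set es \<subseteq> F" and ed: "\<forall>i<length es. vs ! i \<in> es ! i \<and> vs ! Suc i \<in> es ! i"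
    using p(1) unfolding spath_def by auto
  show ?case
  proof (cases "z \<in> set vs")
    case True
    then obtain i where i: "i < length vs" "vs ! i = z" by (auto simp: in_set_conv_nth)
    have "spath F (take (Suc i) vs) (take i es)"
      unfolding spath_def using L dv de sF ed i
      by (auto simp: distinct_take dest: in_set_takeD)
    moreover have "take (Suc i) vs ! 0 = a" using p(2) by simp
    moreover have "take (Suc i) vs ! length (take i es) = z" using i L by auto
    ultimately show ?thesis by blast
  next
    case zn: False
    show ?thesis
    proof (cases "f \<in> set es")
      case True
      then obtain i where i: "i < length es" "es ! i = f" by (auto simp: in_set_conv_nth)
      let ?vs = "take (Suc i) vs @ [z]" and ?es = "take i es @ [f]"
      have "spath F ?vs ?es"
        unfolding spath_def
      proof (intro conjI)
        show "length ?vs = Suc (length ?es)" using L i by auto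
        show "distinct ?vs" using dv zn by (auto simp: distinct_take dest: in_set_takeD)
        have "f \<in> set (drop i es)" using i by (metis Cons_nth_drop_Suc list.set_intros(1))
        hence "f \<notin> set (take i es)" using de set_take_disj_set_drop_if_distinct[OF de, of i i] by auto
        thus "distinct ?es" using de by (auto simp: distinct_take)
        show "set ?es \<subseteq> F" using sF f by (auto dest: in_set_takeD)
        show "\<forall>t<length ?es. ?vs ! t \<in> ?es ! t \<and> ?vs ! Suc t \<in> ?es ! t"
        proof (intro allI impI)
        fix t assume t: "t < length ?es"
        show "?vs ! t \<in> ?es ! t \<and> ?vs ! Suc t \<in> ?es ! t"
        proof (cases "t < i")
          case True thus ?thesis using ed i L by (auto simp: nth_append)
        next
          case False
          hence "t = i" using t i by auto
          thus ?thesis using ed i L f by (auto simp: nth_append)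
        qed
        qed
      qed
      moreover have "?vs ! 0 = a" using p(2) L by (simp add: nth_append)
      moreover have "?vs ! length ?es = z" using i L by (auto simp: nth_append)
      ultimately show ?thesis by blast
    next
      case fn: False
      let ?vs = "vs @ [z]" and ?es = "es @ [f]"
      have "spath F ?vs ?es"
        unfolding spath_def
      proof (intro conjI)
        show "length ?vs = Suc (length ?es)" using L by auto
        show "distinct ?vs" using dv zn by auto
        show "distinct ?es" using de fn by auto
        show "set ?es \<subseteq> F" using sF f by auto
        show "\<forall>t<length ?es. ?vs ! t \<in> ?es ! t \<and> ?vs ! Suc t \<in> ?es ! t"
        proof (intro allI impI)
        fix t assume t: "t < length ?es"
        show "?vs ! t \<in> ?es ! t \<and> ?vs ! Suc t \<in> ?es ! t"
        proof (cases "t < length es")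
          case True thus ?thesis using ed L by (auto simp: nth_append)
        next
          case False
          hence "t = length es" using t by auto
          thus ?thesis using L f p(3) by (auto simp: nth_append)
        qed
        qed
      qed
      moreover have "?vs ! 0 = a" using p(2) L by (simp add: nth_append)
      moreover have "?vs ! length ?es = z" using L by (auto simp: nth_append)
      ultimately show ?thesis by blast
    qed
  qed
qed

lemma has_cycle_mono: "F \<subseteq> G \<Longrightarrow> has_cycle F \<Longrightarrow> has_cycle G"
  unfolding has_cycle_def by blast

lemma cycle_from_conn:
  assumes "e \<notin> F" "a \<in> e" "b \<in> e" "a \<noteq> b" "conn F a b"
  shows "has_cycle (insert e F)"
proof -
  obtain vs es where p: "spath F vs es" "vs ! 0 = a" "vs ! length es = b"
    using conn_spath[OF assms(5)] by blast
  have L: "length vs = Suc (length es)" and dv: "distinct vs" and de: "distinct es"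
    and sF: "set es \<subseteq> F" and ed: "\<forall>i<length es. vs ! i \<in> es ! i \<and> vs ! Suc i \<in> es ! i"
    using p(1) unfolding spath_def by auto
  have ne: "length es \<noteq> 0" using p assms(4) by auto
  let ?es = "es @ [e]"
  have "length vs = length ?es" using L by simp
  moreover have "length vs \<ge> 2" using L ne by linarith
  moreover have "distinct ?es" using de sF assms(1) by auto
  moreover have "set ?es \<subseteq> insert e F" using sF by auto
  moreover have "\<forall>i < length vs. vs ! i \<in> ?es ! i \<and> vs ! ((i + 1) mod length vs) \<in> ?es ! i"
  proof (intro allI impI)
    fix i assume i: "i < length vs"
    show "vs ! i \<in> ?es ! i \<and> vs ! ((i + 1) mod length vs) \<in> ?es ! i"
    proof (cases "i < length es")
      case True
      hence "(i + 1) mod length vs = Suc i" using L by simp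
      thus ?thesis using ed True by (simp add: nth_append)
    next
      case False
      hence i2: "i = length es" using i L by simp
      hence "(i + 1) mod length vs = 0" using L by simp
      thus ?thesis using i2 p assms by (simp add: nth_append)
    qed
  qed
  ultimately show ?thesis unfolding has_cycle_def using dv by blast
qed

lemma mod_aux: "i < L \<Longrightarrow> Suc d < L \<Longrightarrow> (i + 1 + d) mod L \<noteq> i"
proof
  assume a: "i < L" "Suc d < L" "(i + 1 + d) mod L = i"
  show False
  proof (cases "i + 1 + d < L")
    case True thus False using a by simp
  next
    case False
    hence "(i + 1 + d) mod L = (i + 1 + d - L) mod L" using le_mod_geq by simp
    also have "\<dots> = i + 1 + d - L" using a by simp
    finally have "(i + 1 + d) mod L = i + 1 + d - L" .
    thus False using a False by simp
  qed
qed

lemma cycle_insert_D: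
  assumes "has_cycle (insert e F)"
  shows "has_cycle F \<or> (\<exists>a\<in>e. \<exists>b\<in>e. a \<noteq> b \<and> conn F a b)"
proof -
  obtain vs es where c: "length vs = length es" "length vs \<ge> 2" "distinct vs" "distinct es"
     "set es \<subseteq> insert e F"
     "\<forall>i < length vs. vs ! i \<in> es ! i \<and> vs ! ((i + 1) mod length vs) \<in> es ! i"
    using assms unfolding has_cycle_def by blast
  show ?thesis
  proof (cases "e \<in> set es")
    case False
    hence "set es \<subseteq> F" using c(5) by auto
    hence "has_cycle F" unfolding has_cycle_def using c by blast
    thus ?thesis by blast
  next
    case True
    then obtain i where i: "i < length es" "es ! i = e" by (auto simp: in_set_conv_nth)
    define L where "L = length vs"
    have L2: "L \<ge> 2" using c L_def by simp
    have iL: "i < L" using i c L_def by simp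
    have step: "\<forall>d < L. conn F (vs ! ((i + 1) mod L)) (vs ! ((i + 1 + d) mod L))"
    proof (intro allI impI)
      fix d show "d < L \<Longrightarrow> conn F (vs ! ((i + 1) mod L)) (vs ! ((i + 1 + d) mod L))"
      proof (induction d)
        case 0 show ?case by simp
      next
        case (Suc d)
        define t where "t = (i + 1 + d) mod L"
        have tL: "t < L" using L2 t_def by simp
        have ti: "t \<noteq> i" using mod_aux[OF iL Suc.prems] t_def by simp
        have "es ! t \<noteq> e"
        proof
          assume "es ! t = e"
          hence "es ! t = es ! i" using i by simp
          hence "t = i" using c(4) tL i c(1) L_def nth_eq_iff_index_eq by metis
          thus False using ti by simp
        qed
        moreover have "es ! t \<in> set es" using tL c(1) L_def by simp
        ultimately have eF: "es ! t \<in> F" using c(5) by auto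
        have "vs ! t \<in> es ! t" "vs ! ((t + 1) mod L) \<in> es ! t" using c(6) tL L_def by auto
        moreover have "(t + 1) mod L = (i + 1 + Suc d) mod L" unfolding t_def
          by (simp add: mod_Suc_eq)
        ultimately have "conn F (vs ! t) (vs ! ((i + 1 + Suc d) mod L))"
          using conn_edge[OF eF] by metis
        moreover have "conn F (vs ! ((i + 1) mod L)) (vs ! t)" using Suc t_def by simp
        ultimately show ?case using conn_trans by blast
      qed
    qed
    have "i + 1 + (L - 1) = i + L" using L2 by simp
    hence "(i + 1 + (L - 1)) mod L = i" using iL by simp
    hence cc: "conn F (vs ! ((i + 1) mod L)) (vs ! i)" using step[rule_format, of "L - 1"] L2 by simp
    have "vs ! i \<in> e" "vs ! ((i + 1) mod L) \<in> e" using c(6) i c(1) L_def by auto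
    moreover have "(i + 1) mod L \<noteq> i" using mod_aux[of i L 0] iL L2 by simp
    hence "vs ! ((i + 1) mod L) \<noteq> vs ! i" using c(3) iL L_def L2 nth_eq_iff_index_eq mod_less_divisor by (metis gr_zeroI not_numeral_le_zero)
    ultimately show ?thesis using cc by blast
  qed
qed

lemma forest_insert:
  assumes "e \<notin> F"
  shows "\<not> has_cycle (insert e F) \<longleftrightarrow> \<not> has_cycle F \<and> (\<forall>a\<in>e. \<forall>b\<in>e. conn F a b \<longrightarrow> a = b)"
  using cycle_insert_D[of e F] cycle_from_conn[OF assms] has_cycle_mono[of F "insert e F"] by blast

definition near :: "nat set set \<Rightarrow> nat \<Rightarrow> nat + nat set \<Rightarrow> bool" where
  "near F x ob = (case ob of Inl r \<Rightarrow> conn F x r | Inr b \<Rightarrow> (\<exists>y\<in>b. conn F x y))"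

definition valid :: "nat set \<Rightarrow> nat set set \<Rightarrow> nat + nat set \<Rightarrow> bool" where
  "valid V F ob = (case ob of Inl x \<Rightarrow> x \<in> V | Inr b \<Rightarrow> b \<in> F)"

definition mixed :: "nat set \<Rightarrow> nat set set \<Rightarrow> (nat + nat set) set \<Rightarrow> bool" where
  "mixed V F OS \<longleftrightarrow> (\<forall>ob\<in>OS. valid V F ob) \<and> (\<forall>x\<in>V. \<exists>!ob. ob \<in> OS \<and> near F x ob)"

definition sepd :: "nat set set \<Rightarrow> nat set \<Rightarrow> bool" where
  "sepd F e \<longleftrightarrow> (\<forall>a\<in>e. \<forall>b\<in>e. conn F a b \<longrightarrow> a = b)"

lemma near_Inl[simp]: "near F x (Inl r) = conn F x r" unfolding near_def by simp
lemma near_Inr[simp]: "near F x (Inr b) = (\<exists>y\<in>b. conn F x y)" unfolding near_def by simp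
lemma valid_Inl[simp]: "valid V F (Inl r) = (r \<in> V)" unfolding valid_def by simp
lemma valid_Inr[simp]: "valid V F (Inr b) = (b \<in> F)" unfolding valid_def by simp

lemma near_mono: "F \<subseteq> G \<Longrightarrow> near F x ob \<Longrightarrow> near G x ob"
  by (cases ob) (auto intro: conn_mono)

lemma near_trans: "conn F x y \<Longrightarrow> near F y ob \<Longrightarrow> near F x ob"
  by (cases ob) (auto intro: conn_trans)

lemma near_same: "near F x ob \<Longrightarrow> near F y ob \<Longrightarrow> valid V F ob \<Longrightarrow> conn F x y"
proof (cases ob)
  case (Inl r)
  thus "near F x ob \<Longrightarrow> near F y ob \<Longrightarrow> valid V F ob \<Longrightarrow> conn F x y" by (auto intro: conn_trans conn_sym)
next
  case (Inr b)
  assume "near F x ob" "near F y ob" "valid V F ob"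
  then obtain y1 y2 where "y1 \<in> b" "y2 \<in> b" "conn F x y1" "conn F y y2" "b \<in> F" using Inr by auto
  moreover have "conn F y1 y2" using calculation by (intro conn_edge) auto
  ultimately show "conn F x y" by (meson conn_sym conn_trans)
qed

lemma near_insert:
  "near (insert e F) x ob \<longleftrightarrow> near F x ob \<or> ((\<exists>a\<in>e. conn F x a) \<and> (\<exists>b\<in>e. near F b ob))"
  by (cases ob) (auto simp: conn_insert)

lemma mixed_merge:
  assumes mx: "mixed V F OS" and eF: "e \<notin> F" and eV: "e \<subseteq> V" and sp: "sepd F e"
    and N: "N = {ob\<in>OS. \<exists>a\<in>e. near F a ob}" and o0: "o0 \<in> N \<or> o0 = Inr e"
  shows "mixed V (insert e F) ((OS - N) \<union> {o0})"
  unfolding mixed_def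
proof (intro conjI ballI)
  fix ob assume "ob \<in> (OS - N) \<union> {o0}"
  thus "valid V (insert e F) ob" using mx o0 N unfolding mixed_def valid_def
    by (auto split: sum.splits)
next
  fix x assume x: "x \<in> V"
  obtain ox where ox: "ox \<in> OS" "near F x ox" and ou: "\<And>ob. ob \<in> OS \<Longrightarrow> near F x ob \<Longrightarrow> ob = ox"
    using mx x unfolding mixed_def by metis
  have vO: "\<And>ob. ob \<in> OS \<Longrightarrow> valid V F ob" using mx unfolding mixed_def by auto
  show "\<exists>!ob. ob \<in> (OS - N) \<union> {o0} \<and> near (insert e F) x ob"
  proof (cases "\<exists>a\<in>e. conn F x a")
    case True
    then obtain a where a: "a \<in> e" "conn F x a" by blast
    have n0: "near (insert e F) x o0"
    proof (cases "o0 = Inr e")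
      case True
      have "conn (insert e F) x a" using a by (auto intro: conn_mono)
      thus ?thesis using True a by auto
    next
      case False
      hence "o0 \<in> N" using o0 by auto
      then obtain a' where "a' \<in> e" "near F a' o0" using N by auto
      thus ?thesis using near_insert True by blast
    qed
    have "\<And>ob. ob \<in> (OS - N) \<union> {o0} \<Longrightarrow> near (insert e F) x ob \<Longrightarrow> ob = o0"
    proof -
      fix ob assume ob: "ob \<in> (OS - N) \<union> {o0}" "near (insert e F) x ob"
      show "ob = o0"
      proof (rule ccontr)
        assume "ob \<noteq> o0"
        hence oN: "ob \<in> OS" "ob \<notin> N" using ob by auto
        from ob(2) have "near F x ob \<or> (\<exists>b\<in>e. near F b ob)" using near_insert by blast
        hence "\<exists>b\<in>e. near F b ob"
          using a near_trans[OF conn_sym[OF a(2)]] by blast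
        thus False using oN N by auto
      qed
    qed
    thus ?thesis using n0 by blast
  next
    case False
    have eqn: "\<And>ob. near (insert e F) x ob \<longleftrightarrow> near F x ob" using False near_insert by blast
    have oxN: "ox \<notin> N"
    proof
      assume "ox \<in> N"
      then obtain a where "a \<in> e" "near F a ox" using N by auto
      hence "conn F x a" using near_same[OF ox(2) _ vO[OF ox(1)]] by blast
      thus False using False \<open>a \<in> e\<close> by blast
    qed
    have o0n: "\<not> near F x o0"
    proof
      assume h: "near F x o0"
      show False
      proof (cases "o0 = Inr e")
        case True thus False using h False by auto
      next
        case f2: False
        hence "o0 \<in> N" using o0 by auto
        then obtain a where "a \<in> e" "near F a o0" "o0 \<in> OS" using N by auto
        hence "conn F x a" using near_same[OF h _ vO] by blast
        thus False using False \<open>a \<in> e\<close> by blast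
      qed
    qed
    show ?thesis
    proof (rule ex1I[of _ ox])
      show "ox \<in> OS - N \<union> {o0} \<and> near (insert e F) x ox" using ox oxN eqn by auto
    next
      fix ob assume "ob \<in> OS - N \<union> {o0} \<and> near (insert e F) x ob"
      thus "ob = ox" using eqn o0n ou by auto
    qed
  qed
qed

lemma mixed_split_edge:
  assumes mx: "mixed V G OS" and eO: "Inr e \<in> OS" and fo: "\<not> has_cycle G" and eV: "e \<subseteq> V"
  shows "mixed V (G - {e}) ((OS - {Inr e}) \<union> Inl ` e)"
proof -
  define F where "F = G - {e}"
  have vO: "\<And>ob. ob \<in> OS \<Longrightarrow> valid V G ob" using mx unfolding mixed_def by auto
  have eG: "e \<in> G" using vO[OF eO] by simp
  have GF: "G = insert e F" "e \<notin> F" using eG F_def by auto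
  have sp: "\<And>a b. a \<in> e \<Longrightarrow> b \<in> e \<Longrightarrow> conn F a b \<Longrightarrow> a = b"
    using forest_insert[OF GF(2)] fo GF(1) by auto
  show ?thesis unfolding F_def[symmetric] mixed_def
  proof (intro conjI ballI)
    fix ob assume "ob \<in> OS - {Inr e} \<union> Inl ` e"
    thus "valid V F ob"
    proof
      assume "ob \<in> OS - {Inr e}" thus ?thesis using vO[of ob] F_def unfolding valid_def by (auto split: sum.splits)
    next
      assume "ob \<in> Inl ` e" thus ?thesis using eV by auto
    qed
  next
    fix x assume x: "x \<in> V"
    obtain ox where ox: "ox \<in> OS" "near G x ox" and ou: "\<And>ob. ob \<in> OS \<Longrightarrow> near G x ob \<Longrightarrow> ob = ox"
      using mx x unfolding mixed_def by metis
    show "\<exists>!ob. ob \<in> OS - {Inr e} \<union> Inl ` e \<and> near F x ob"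
    proof (cases "\<exists>a\<in>e. conn F x a")
      case True
      then obtain a where a: "a \<in> e" "conn F x a" by blast
      show ?thesis
      proof (rule ex1I[of _ "Inl a"])
        show "Inl a \<in> OS - {Inr e} \<union> Inl ` e \<and> near F x (Inl a)" using a by auto
      next
        fix ob assume ob: "ob \<in> OS - {Inr e} \<union> Inl ` e \<and> near F x ob"
        show "ob = Inl a"
        proof (cases "ob \<in> Inl ` e")
          case True
          then obtain a' where "a' \<in> e" "ob = Inl a'" by auto
          thus ?thesis using ob a sp by (metis conn_sym conn_trans near_Inl)
        next
          case False
          hence "ob \<in> OS" "ob \<noteq> Inr e" using ob by auto
          moreover have "near G x ob" using ob GF(1) near_mono[of F G] by auto
          moreover have "near G x (Inr e)" using a GF(1) conn_mono[of F G] by auto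
          ultimately show ?thesis using ou[of ob] ou[of "Inr e"] eO by simp
        qed
      qed
    next
      case False
      have eqn: "\<And>ob. near G x ob \<longleftrightarrow> near F x ob" unfolding GF(1) using False near_insert by blast
      have "ox \<noteq> Inr e" using ox(2) eqn False by auto
      show ?thesis
      proof (rule ex1I[of _ ox])
        show "ox \<in> OS - {Inr e} \<union> Inl ` e \<and> near F x ox" using ox eqn \<open>ox \<noteq> Inr e\<close> by auto
      next
        fix ob assume "ob \<in> OS - {Inr e} \<union> Inl ` e \<and> near F x ob"
        thus "ob = ox" using False eqn ou by auto
      qed
    qed
  qed
qed

lemma mixed_split_vertex:
  assumes mx: "mixed V G OS" and eG: "e \<in> G" and eO: "Inr e \<notin> OS" and fo: "\<not> has_cycle G"
    and eV: "e \<subseteq> V" and h: "h \<in> e" "oh \<in> OS" "near (G - {e}) h oh"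
  shows "mixed V (G - {e}) (OS \<union> Inl ` (e - {h}))"
proof -
  define F where "F = G - {e}"
  have vO: "\<And>ob. ob \<in> OS \<Longrightarrow> valid V G ob" using mx unfolding mixed_def by auto
  have GF: "G = insert e F" "e \<notin> F" using eG F_def by auto
  have sp: "\<And>a b. a \<in> e \<Longrightarrow> b \<in> e \<Longrightarrow> conn F a b \<Longrightarrow> a = b"
    using forest_insert[OF GF(2)] fo GF(1) by auto
  have vOF: "valid V F ob" if "ob \<in> OS" for ob
  proof (cases ob)
    case (Inl x) thus ?thesis using vO[OF that] by simp
  next
    case (Inr b) thus ?thesis using vO[OF that] that eO F_def by auto
  qed
  have hF: "near F h oh" using h F_def by simp
  show ?thesis unfolding F_def[symmetric] mixed_def
  proof (intro conjI ballI)
    fix ob assume "ob \<in> OS \<union> Inl ` (e - {h})"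
    thus "valid V F ob" using vOF eV by auto
  next
    fix x assume x: "x \<in> V"
    obtain ox where ox: "ox \<in> OS" "near G x ox" and ou: "\<And>ob. ob \<in> OS \<Longrightarrow> near G x ob \<Longrightarrow> ob = ox"
      using mx x unfolding mixed_def by metis
    show "\<exists>!ob. ob \<in> OS \<union> Inl ` (e - {h}) \<and> near F x ob"
    proof (cases "\<exists>a\<in>e. conn F x a")
      case True
      then obtain a where a: "a \<in> e" "conn F x a" by blast
      have xh: "conn G x h"
      proof -
        have "conn G x a" using a GF(1) conn_mono[of F G] by blast
        moreover have "conn G a h" using GF(1) a h by (intro conn_edge) auto
        ultimately show ?thesis using conn_trans by blast
      qed
      have ohG: "near G x oh" using near_trans[OF xh] near_mono[of F G] hF GF(1) by blast
      hence ohx: "oh = ox" using ou h(2) by blast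
      show ?thesis
      proof (cases "a = h")
        case True
        show ?thesis
        proof (rule ex1I[of _ oh])
          show "oh \<in> OS \<union> Inl ` (e - {h}) \<and> near F x oh" using h(2) hF a True near_trans by blast
        next
          fix ob assume ob: "ob \<in> OS \<union> Inl ` (e - {h}) \<and> near F x ob"
          show "ob = oh"
          proof (cases "ob \<in> OS")
            case True
            hence "near G x ob" using ob near_mono[of F G] GF(1) by blast
            thus ?thesis using ou True ohx by auto
          next
            case False
            then obtain a' where "a' \<in> e" "a' \<noteq> h" "ob = Inl a'" using ob by auto
            hence "conn F a a'" using ob a by (metis conn_sym conn_trans near_Inl)
            thus ?thesis using sp \<open>a' \<in> e\<close> a \<open>a' \<noteq> h\<close> True by blast
          qed
        qed
      next
        case False
        show ?thesis
        proof (rule ex1I[of _ "Inl a"])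
          show "Inl a \<in> OS \<union> Inl ` (e - {h}) \<and> near F x (Inl a)" using a False by auto
        next
          fix ob assume ob: "ob \<in> OS \<union> Inl ` (e - {h}) \<and> near F x ob"
          show "ob = Inl a"
          proof (cases "ob \<in> OS")
            case True
            hence "near G x ob" using ob near_mono[of F G] GF(1) by blast
            hence "ob = oh" using ou True ohx by auto
            hence "conn F x h" using near_same[OF _ hF vOF[OF h(2)]] ob by auto
            hence "conn F a h" using a by (meson conn_sym conn_trans)
            thus ?thesis using sp a h False by blast
          next
            case f2: False
            then obtain a' where "a' \<in> e" "ob = Inl a'" using ob by auto
            thus ?thesis using ob a sp by (metis conn_sym conn_trans near_Inl)
          qed
        qed
      qed
    next
      case False
      have eqn: "\<And>ob. near G x ob \<longleftrightarrow> near F x ob" unfolding GF(1) using False near_insert by blast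
      show ?thesis
      proof (rule ex1I[of _ ox])
        show "ox \<in> OS \<union> Inl ` (e - {h}) \<and> near F x ox" using ox eqn by auto
      next
        fix ob assume "ob \<in> OS \<union> Inl ` (e - {h}) \<and> near F x ob"
        thus "ob = ox" using False eqn ou by auto
      qed
    qed
  qed
qed

definition HE :: "nat set \<Rightarrow> nat \<Rightarrow> nat set set" where
  "HE V k = {e. e \<subseteq> V \<and> card e = k}"

definition Mset :: "nat set \<Rightarrow> nat \<Rightarrow> nat \<Rightarrow> nat \<Rightarrow> nat \<Rightarrow> (nat set set \<times> (nat + nat set) set) set" where
  "Mset V k j r q = {(F, OS). F \<subseteq> HE V k \<and> \<not> has_cycle F \<and> card F = j \<and> mixed V F OS \<and>
      card (Inl -` OS) = r \<and> card (Inr -` OS) = q}"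

lemma finite_HE: "finite V \<Longrightarrow> finite (HE V k)"
  unfolding HE_def by (rule finite_subset[of _ "Pow V"]) auto

lemma mixed_valid: "mixed V F OS \<Longrightarrow> ob \<in> OS \<Longrightarrow> valid V F ob"
  unfolding mixed_def by auto

lemma mixed_uniq: "mixed V F OS \<Longrightarrow> x \<in> V \<Longrightarrow> ob \<in> OS \<Longrightarrow> near F x ob \<Longrightarrow> ob' \<in> OS \<Longrightarrow> near F x ob' \<Longrightarrow> ob = ob'"
  unfolding mixed_def by metis

lemma mixed_ex: "mixed V F OS \<Longrightarrow> x \<in> V \<Longrightarrow> \<exists>ob\<in>OS. near F x ob"
  unfolding mixed_def by metis

lemma mixed_Inl_V: "mixed V F OS \<Longrightarrow> Inl a \<in> OS \<Longrightarrow> a \<in> V"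
  using mixed_valid by fastforce

lemma mixed_Inr_F: "mixed V F OS \<Longrightarrow> Inr b \<in> OS \<Longrightarrow> b \<in> F"
  using mixed_valid by fastforce

lemma roots_sep: "mixed V F OS \<Longrightarrow> Inl a \<in> OS \<Longrightarrow> Inl b \<in> OS \<Longrightarrow> conn F a b \<Longrightarrow> a = b"
  using mixed_uniq[of V F OS a "Inl a" "Inl b"] mixed_Inl_V by auto

lemma near_root: "mixed V F OS \<Longrightarrow> Inl a \<in> OS \<Longrightarrow> ob \<in> OS \<Longrightarrow> near F a ob \<Longrightarrow> ob = Inl a"
  using mixed_uniq[of V F OS a ob "Inl a"] mixed_Inl_V by auto

lemma Mset_D:
  assumes "(F, OS) \<in> Mset V k j r q" "finite V"
  shows "F \<subseteq> HE V k" "\<not> has_cycle F" "card F = j" "mixed V F OS" "card (Inl -` OS) = r"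
    "card (Inr -` OS) = q" "finite F" "finite (Inl -` OS)" "finite (Inr -` OS)" "Inr -` OS \<subseteq> F"
    "Inl -` OS \<subseteq> V"
proof -
  show F: "F \<subseteq> HE V k" "\<not> has_cycle F" "card F = j" "mixed V F OS" "card (Inl -` OS) = r"
    "card (Inr -` OS) = q" using assms unfolding Mset_def by auto
  show fF: "finite F" using F(1) finite_HE[OF assms(2)] finite_subset by blast
  show s1: "Inr -` OS \<subseteq> F" using mixed_Inr_F[OF F(4)] by auto
  show s2: "Inl -` OS \<subseteq> V" using mixed_Inl_V[OF F(4)] by auto
  show "finite (Inl -` OS)" using s2 assms(2) finite_subset by blast
  show "finite (Inr -` OS)" using s1 fF finite_subset by blast
qed

lemma HE_sub: "F \<subseteq> HE V k \<Longrightarrow> e \<in> F \<Longrightarrow> e \<subseteq> V \<and> card e = k"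
  unfolding HE_def by auto

lemma mixed_empty: "mixed V {} OS \<longleftrightarrow> OS = Inl ` V"
proof
  assume m: "mixed V {} OS"
  have v: "ob \<in> OS \<Longrightarrow> ob \<in> Inl ` V" for ob using mixed_valid[OF m, of ob]
    by (cases ob) auto
  have "x \<in> V \<Longrightarrow> Inl x \<in> OS" for x
  proof -
    assume x: "x \<in> V"
    then obtain ob where "ob \<in> OS" "near {} x ob" using mixed_ex[OF m] by blast
    thus "Inl x \<in> OS" using v by (cases ob) (auto simp: conn_empty)
  qed
  thus "OS = Inl ` V" using v by auto
next
  assume "OS = Inl ` V"
  thus "mixed V {} OS" unfolding mixed_def by (auto simp: conn_empty)
qed

lemma Mset_0:
  assumes "finite V"
  shows "Mset V k 0 r q = (if r = card V \<and> q = 0 then {({}, Inl ` V)} else {})"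
proof -
  have e: "Inr -` (Inl ` V :: (nat + nat set) set) = {}" by auto
  have c1: "card (Inl -` (Inl ` V :: (nat + nat set) set)) = card V" by (metis inj_Inl inj_vimage_image_eq)
  have c2: "card (Inr -` (Inl ` V :: (nat + nat set) set)) = 0" by (metis card.empty e)
  have "(F, OS) \<in> Mset V k 0 r q \<longleftrightarrow> F = {} \<and> OS = Inl ` V \<and> r = card V \<and> q = 0" for F OS
  proof
    assume a: "(F, OS) \<in> Mset V k 0 r q"
    have "F = {}" using Mset_D[OF a assms] by auto
    moreover hence "OS = Inl ` V" using Mset_D(4)[OF a assms] mixed_empty by auto
    ultimately show "F = {} \<and> OS = Inl ` V \<and> r = card V \<and> q = 0" using Mset_D(5,6)[OF a assms] c1 c2 by simp
  next
    assume "F = {} \<and> OS = Inl ` V \<and> r = card V \<and> q = 0"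
    thus "(F, OS) \<in> Mset V k 0 r q" unfolding Mset_def using mixed_empty c1 c2
      by (auto simp: has_cycle_def)
  qed
  thus ?thesis by auto
qed

definition head :: "nat set set \<Rightarrow> (nat + nat set) set \<Rightarrow> nat set \<Rightarrow> nat" where
  "head G OS e = (THE h. h \<in> e \<and> (\<exists>ob\<in>OS. near (G - {e}) h ob))"

lemma head_ex1:
  assumes mx: "mixed V G OS" and fo: "\<not> has_cycle G" and eG: "e \<in> G" and eV: "e \<subseteq> V"
    and ne: "e \<noteq> {}" and eO: "Inr e \<notin> OS"
  shows "\<exists>!h. h \<in> e \<and> (\<exists>ob\<in>OS. near (G - {e}) h ob)"
proof -
  define F where "F = G - {e}"
  have GF: "G = insert e F" "e \<notin> F" using eG F_def by auto
  have sp: "\<And>a b. a \<in> e \<Longrightarrow> b \<in> e \<Longrightarrow> conn F a b \<Longrightarrow> a = b"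
    using forest_insert[OF GF(2)] fo GF(1) by auto
  obtain a0 where a0: "a0 \<in> e" using ne by blast
  obtain ob0 where ob0: "ob0 \<in> OS" "near G a0 ob0" using mixed_ex[OF mx] a0 eV by blast
  have "near F a0 ob0 \<or> ((\<exists>a\<in>e. conn F a0 a) \<and> (\<exists>b\<in>e. near F b ob0))"
    using ob0(2) near_insert GF(1) by metis
  hence ex: "\<exists>h. h \<in> e \<and> (\<exists>ob\<in>OS. near F h ob)" using a0 ob0(1) by blast
  have un: "h = h'" if h: "h \<in> e" "ob \<in> OS" "near F h ob" and h': "h' \<in> e" "ob' \<in> OS" "near F h' ob'"
    for h h' ob ob'
  proof -
    have "near G h ob" using h(3) GF(1) near_mono[of F G] by blast
    have "conn G h h'" using GF(1) h h' by (intro conn_edge) auto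
    hence "near G h ob'" using near_trans h'(3) GF(1) near_mono[of F G] by blast
    hence "ob = ob'" using mixed_uniq[OF mx, of h ob ob'] h h' eV \<open>near G h ob\<close> by auto
    have vF: "valid V F ob"
    proof (cases ob)
      case (Inl x) thus ?thesis using mixed_valid[OF mx h(2)] by simp
    next
      case (Inr b) thus ?thesis using mixed_valid[OF mx h(2)] h(2) eO F_def by auto
    qed
    have "conn F h h'" using near_same[OF h(3) _ vF] h'(3) \<open>ob = ob'\<close> by blast
    thus ?thesis using sp h h' by blast
  qed
  show ?thesis using ex un unfolding F_def by blast
qed

lemma head_prop:
  assumes "mixed V G OS" "\<not> has_cycle G" "e \<in> G" "e \<subseteq> V" "e \<noteq> {}" "Inr e \<notin> OS"
  shows "head G OS e \<in> e \<and> (\<exists>ob\<in>OS. near (G - {e}) (head G OS e) ob)"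
  unfolding head_def using theI'[OF head_ex1[OF assms]] .

lemma head_eq:
  assumes "mixed V G OS" "\<not> has_cycle G" "e \<in> G" "e \<subseteq> V" "e \<noteq> {}" "Inr e \<notin> OS"
    and "h \<in> e" "ob \<in> OS" "near (G - {e}) h ob"
  shows "head G OS e = h"
  unfolding head_def using the1_equality[OF head_ex1[OF assms(1-6)]] assms(7-9) by blast

lemma finite_Mset: "finite V \<Longrightarrow> finite (Mset V k j r q)"
proof -
  assume fV: "finite V"
  have "Mset V k j r q \<subseteq> Pow (HE V k) \<times> Pow (Inl ` V \<union> Inr ` HE V k)"
  proof
    fix x assume x: "x \<in> Mset V k j r q"
    obtain F OS where xe: "x = (F, OS)" by (cases x)
    have m: "(F, OS) \<in> Mset V k j r q" using x xe by simp
    have "OS \<subseteq> Inl ` V \<union> Inr ` HE V k"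
    proof
      fix ob assume "ob \<in> OS"
      hence "valid V F ob" using mixed_valid Mset_D(4)[OF m fV] by blast
      thus "ob \<in> Inl ` V \<union> Inr ` HE V k" using Mset_D(1)[OF m fV] by (cases ob) auto
    qed
    thus "x \<in> Pow (HE V k) \<times> Pow (Inl ` V \<union> Inr ` HE V k)" using xe Mset_D(1)[OF m fV] by auto
  qed
  moreover have "finite (Pow (HE V k) \<times> Pow (Inl ` V \<union> Inr ` HE V k))"
    using fV finite_HE by auto
  ultimately show ?thesis using finite_subset by blast
qed

lemma no_Inr: "(F, OS) \<in> Mset V k j r 0 \<Longrightarrow> finite V \<Longrightarrow> Inr b \<notin> OS"
proof
  assume a: "(F, OS) \<in> Mset V k j r 0" "finite V" "Inr b \<in> OS"
  have "Inr -` OS = {}" using Mset_D(6,9)[OF a(1,2)] by simp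
  thus False using a(3) by auto
qed

lemma fA_mem:
  assumes fV: "finite V" and k: "k \<ge> 2" and m: "(F, OS) \<in> Mset V k j (r + k - 1) 0"
    and v: "v \<in> V" and S: "S \<subseteq> Inl -` OS" "card S = k - 1" and nc: "\<forall>s\<in>S. \<not> conn F v s"
  shows "(insert (insert v S) F, OS - Inl ` S) \<in> Mset V k (Suc j) r 0"
    and "head (insert (insert v S) F) (OS - Inl ` S) (insert v S) = v"
    and "insert v S \<notin> F" and "v \<notin> S"
proof -
  note D = Mset_D[OF m fV]
  have nI: "\<And>b. Inr b \<notin> OS" using no_Inr[OF m fV] .
  have SV: "S \<subseteq> V" using S D(11) by auto
  have fS: "finite S" using SV fV finite_subset by blast
  have Sne: "S \<noteq> {}" using S(2) k by auto
  show vS: "v \<notin> S" using nc conn_refl by blast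
  define e where "e = insert v S"
  have ce: "card e = k" using e_def fS vS S(2) k by simp
  have eV: "e \<subseteq> V" using e_def SV v by auto
  have sp: "\<forall>a\<in>e. \<forall>b\<in>e. conn F a b \<longrightarrow> a = b"
  proof (intro ballI impI)
    fix a b assume ab: "a \<in> e" "b \<in> e" "conn F a b"
    show "a = b"
    proof (cases "a = v")
      case True
      thus ?thesis using ab nc e_def by auto
    next
      case False
      hence aS: "a \<in> S" using ab e_def by auto
      show ?thesis
      proof (cases "b = v")
        case True thus ?thesis using ab(3) nc aS conn_sym by blast
      next
        case False
        hence "b \<in> S" using ab e_def by auto
        thus ?thesis using roots_sep[OF D(4), of a b] aS S ab(3) by auto
      qed
    qed
  qed
  show eF: "insert v S \<notin> F"
  proof
    assume "insert v S \<in> F"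
    moreover obtain s where "s \<in> S" using Sne by blast
    ultimately have "conn F v s" using conn_edge[of "insert v S" F v s] by blast
    thus False using nc \<open>s \<in> S\<close> by blast
  qed
  hence eF': "e \<notin> F" using e_def by simp
  have acyc: "\<not> has_cycle (insert e F)" using forest_insert[OF eF'] D(2) sp by blast
  have cardG: "card (insert e F) = Suc j" using D(3,7) eF' by simp
  have sub: "insert e F \<subseteq> HE V k" using D(1) eV ce unfolding HE_def by auto
  obtain ob0 where ob0: "ob0 \<in> OS" "near F v ob0" using mixed_ex[OF D(4) v] by blast
  obtain s0 where s0: "ob0 = Inl s0" using nI ob0(1) by (cases ob0) auto
  have s0S: "s0 \<notin> S" using nc ob0(2) s0 by auto
  define N where "N = {ob\<in>OS. \<exists>a\<in>e. near F a ob}"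
  have N: "N = insert (Inl s0) (Inl ` S)"
  proof (intro equalityI subsetI)
    fix ob assume "ob \<in> N"
    then obtain a where a: "ob \<in> OS" "a \<in> e" "near F a ob" unfolding N_def by blast
    show "ob \<in> insert (Inl s0) (Inl ` S)"
    proof (cases "a = v")
      case True
      thus ?thesis using mixed_uniq[OF D(4) v a(1) _ ob0(1,2)] a(3) s0 by auto
    next
      case False
      hence "a \<in> S" using a e_def by auto
      hence "ob = Inl a" using near_root[OF D(4) _ a(1) a(3)] S by auto
      thus ?thesis using \<open>a \<in> S\<close> by auto
    qed
  next
    fix ob :: "nat + nat set" assume "ob \<in> insert (Inl s0) (Inl ` S)"
    thus "ob \<in> N"
    proof
      assume "ob = Inl s0" thus ?thesis unfolding N_def using ob0 s0 e_def by auto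
    next
      assume "ob \<in> Inl ` S"
      then obtain x where x: "x \<in> S" "ob = Inl x" by auto
      hence "ob \<in> OS" "x \<in> e" "near F x ob" using S e_def by auto
      thus ?thesis unfolding N_def by blast
    qed
  qed
  have mm: "mixed V (insert e F) ((OS - N) \<union> {Inl s0})"
    by (rule mixed_merge[OF D(4) eF' eV _ N_def]) (use sp N in \<open>auto simp: sepd_def\<close>)
  have OSeq: "(OS - N) \<union> {Inl s0} = OS - Inl ` S" using N ob0 s0 s0S by auto
  have mx2: "mixed V (insert e F) (OS - Inl ` S)" using mm OSeq by simp
  have c1: "Inl -` (OS - Inl ` S) = Inl -` OS - S" by auto
  have c2: "card (Inl -` (OS - Inl ` S)) = r"
    unfolding c1 using card_Diff_subset[OF fS S(1)] D(5) S(2) k by simp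
  have c3: "Inr -` (OS - Inl ` S) = {}" using nI by auto
  show mem: "(insert (insert v S) F, OS - Inl ` S) \<in> Mset V k (Suc j) r 0"
    unfolding Mset_def using acyc cardG sub mx2 c2 c3 e_def by auto
  show "head (insert (insert v S) F) (OS - Inl ` S) (insert v S) = v"
  proof -
    have "insert e F - {e} = F" using eF' by auto
    hence "near (insert e F - {e}) v (Inl s0)" using ob0 s0 by simp
    moreover have "Inl s0 \<in> OS - Inl ` S" using ob0 s0 s0S by auto
    ultimately have "head (insert e F) (OS - Inl ` S) e = v"
      using head_eq[OF mx2 acyc insertI1 eV, of v "Inl s0"] e_def c3 by auto
    thus ?thesis using e_def by simp
  qed
qed

lemma gA_mem:
  assumes fV: "finite V" and k: "k \<ge> 2" and m: "(G, OS) \<in> Mset V k (Suc j) r 0" and eG: "e \<in> G"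
    and h: "h = head G OS e"
  shows "(G - {e}, OS \<union> Inl ` (e - {h})) \<in> Mset V k j (r + k - 1) 0"
    and "h \<in> V" "h \<in> e" "card (e - {h}) = k - 1" "\<forall>s\<in>e - {h}. \<not> conn (G - {e}) h s"
    and "OS \<inter> Inl ` (e - {h}) = {}"
proof -
  note D = Mset_D[OF m fV]
  have nI: "\<And>b. Inr b \<notin> OS" using no_Inr[OF m fV] .
  have eV: "e \<subseteq> V" and ce: "card e = k" using HE_sub[OF D(1) eG] by auto
  have fe: "finite e" using eV fV finite_subset by blast
  have ne: "e \<noteq> {}" using ce k by auto
  have hp: "h \<in> e \<and> (\<exists>ob\<in>OS. near (G - {e}) h ob)"
    using head_prop[OF D(4) D(2) eG eV ne nI] h by simp
  show he: "h \<in> e" using hp by simp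
  then show "h \<in> V" using eV by auto
  obtain oh where oh: "oh \<in> OS" "near (G - {e}) h oh" using hp by blast
  define F where "F = G - {e}"
  have GF: "G = insert e F" "e \<notin> F" using eG F_def by auto
  have sp: "\<And>a b. a \<in> e \<Longrightarrow> b \<in> e \<Longrightarrow> conn F a b \<Longrightarrow> a = b"
    using forest_insert[OF GF(2)] D(2) GF(1) by auto
  show "\<forall>s\<in>e - {h}. \<not> conn (G - {e}) h s" using sp he F_def by blast
  show ck: "card (e - {h}) = k - 1" using ce he fe by simp
  show dj: "OS \<inter> Inl ` (e - {h}) = {}"
  proof (rule ccontr)
    assume "OS \<inter> Inl ` (e - {h}) \<noteq> {}"
    then obtain a where a: "a \<in> e" "a \<noteq> h" "Inl a \<in> OS" by auto
    have "head G OS e = a" using head_eq[OF D(4) D(2) eG eV ne nI a(1) a(3)] by simp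
    thus False using h a(2) by simp
  qed
  have mx: "mixed V F (OS \<union> Inl ` (e - {h}))"
    using mixed_split_vertex[OF D(4) eG nI D(2) eV he oh] F_def by simp
  have sub: "F \<subseteq> HE V k" using D(1) F_def by auto
  have acyc: "\<not> has_cycle F" using D(2) has_cycle_mono[of F G] F_def by auto
  have cF: "card F = j" using D(3,7) eG F_def by simp
  have i1: "Inl -` (OS \<union> Inl ` (e - {h})) = Inl -` OS \<union> (e - {h})" by auto
  have i2: "Inl -` OS \<inter> (e - {h}) = {}" using dj by auto
  have c1: "card (Inl -` (OS \<union> Inl ` (e - {h}))) = r + k - 1"
    unfolding i1 using card_Un_disjoint[OF D(8) _ i2] fe ck D(5) k by simp
  have c2: "Inr -` (OS \<union> Inl ` (e - {h})) = {}" using nI by auto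
  show "(G - {e}, OS \<union> Inl ` (e - {h})) \<in> Mset V k j (r + k - 1) 0"
    unfolding Mset_def using sub acyc cF mx c1 c2 F_def by auto
qed

lemma fibA_card:
  assumes fV: "finite V" and m: "(F, OS) \<in> Mset V k j R 0"
  shows "card {(v, S). v \<in> V \<and> S \<subseteq> Inl -` OS \<and> card S = k - 1 \<and> (\<forall>s\<in>S. \<not> conn F v s)}
         = card V * ((R - 1) choose (k - 1))"
proof -
  note D = Mset_D[OF m fV]
  have nI: "\<And>b. Inr b \<notin> OS" using no_Inr[OF m fV] .
  have eq: "{(v, S). v \<in> V \<and> S \<subseteq> Inl -` OS \<and> card S = k - 1 \<and> (\<forall>s\<in>S. \<not> conn F v s)}
     = Sigma V (\<lambda>v. {S. S \<subseteq> {s \<in> Inl -` OS. \<not> conn F v s} \<and> card S = k - 1})" by auto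
  have cv: "card {s \<in> Inl -` OS. \<not> conn F v s} = R - 1" if v: "v \<in> V" for v
  proof -
    obtain ob0 where ob0: "ob0 \<in> OS" "near F v ob0" using mixed_ex[OF D(4) v] by blast
    obtain s0 where s0: "ob0 = Inl s0" using nI ob0(1) by (cases ob0) auto
    have "{s \<in> Inl -` OS. \<not> conn F v s} = Inl -` OS - {s0}"
    proof (intro equalityI subsetI)
      fix s assume "s \<in> {s \<in> Inl -` OS. \<not> conn F v s}"
      thus "s \<in> Inl -` OS - {s0}" using ob0 s0 by auto
    next
      fix s assume s: "s \<in> Inl -` OS - {s0}"
      show "s \<in> {s \<in> Inl -` OS. \<not> conn F v s}"
      proof (rule ccontr)
        assume "s \<notin> {s \<in> Inl -` OS. \<not> conn F v s}"
        hence "conn F v s" using s by auto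
        hence "Inl s = ob0" using mixed_uniq[OF D(4) v, of "Inl s" ob0] ob0 s by auto
        thus False using s s0 by auto
      qed
    qed
    moreover have "s0 \<in> Inl -` OS" using ob0 s0 by auto
    ultimately show ?thesis using D(5,8) by simp
  qed
  have "card (Sigma V (\<lambda>v. {S. S \<subseteq> {s \<in> Inl -` OS. \<not> conn F v s} \<and> card S = k - 1}))
     = (\<Sum>v\<in>V. card {S. S \<subseteq> {s \<in> Inl -` OS. \<not> conn F v s} \<and> card S = k - 1})"
  proof (rule card_SigmaI)
    show "finite V" by (rule fV)
    show "\<forall>v\<in>V. finite {S. S \<subseteq> {s \<in> Inl -` OS. \<not> conn F v s} \<and> card S = k - 1}"
    proof
    fix v assume "v \<in> V"
    have "{S. S \<subseteq> {s \<in> Inl -` OS. \<not> conn F v s} \<and> card S = k - 1} \<subseteq> Pow (Inl -` OS)" by auto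
    thus "finite {S. S \<subseteq> {s \<in> Inl -` OS. \<not> conn F v s} \<and> card S = k - 1}"
      using D(8) finite_subset by blast
    qed
  qed
  also have "\<dots> = (\<Sum>v\<in>V. (R - 1) choose (k - 1))"
  proof (rule sum.cong)
    fix v assume "v \<in> V"
    have "finite {s \<in> Inl -` OS. \<not> conn F v s}" using D(8) by (rule finite_subset[rotated]) auto
    thus "card {S. S \<subseteq> {s \<in> Inl -` OS. \<not> conn F v s} \<and> card S = k - 1} = (R - 1) choose (k - 1)"
      using n_subsets[of "{s \<in> Inl -` OS. \<not> conn F v s}" "k - 1"] cv[OF \<open>v \<in> V\<close>] by simp
  qed simp
  also have "\<dots> = card V * ((R - 1) choose (k - 1))" by simp
  finally show ?thesis using eq by simp
qed

lemma countA:
  assumes fV: "finite V" and k: "k \<ge> 2"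
  shows "Suc j * card (Mset V k (Suc j) r 0) =
         card (Mset V k j (r + k - 1) 0) * (card V * ((r + k - 2) choose (k - 1)))"
proof -
  define A where "A = Sigma (Mset V k j (r + k - 1) 0)
     (\<lambda>x. {(v, S). v \<in> V \<and> S \<subseteq> Inl -` (snd x) \<and> card S = k - 1 \<and> (\<forall>s\<in>S. \<not> conn (fst x) v s)})"
  define B where "B = Sigma (Mset V k (Suc j) r 0) (\<lambda>x. fst x)"
  define f :: "(nat set set \<times> (nat + nat set) set) \<times> (nat \<times> nat set) \<Rightarrow> _" where
    "f = (\<lambda>((F, OS), (v, S)). ((insert (insert v S) F, OS - Inl ` S), insert v S))"
  define g :: "(nat set set \<times> (nat + nat set) set) \<times> nat set \<Rightarrow> _" where
    "g = (\<lambda>((G, OS), e). ((G - {e}, OS \<union> Inl ` (e - {head G OS e})), (head G OS e, e - {head G OS e})))"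
  have bij: "bij_betw f A B"
  proof (rule bij_betw_byWitness[where f' = g])
    show "\<forall>a\<in>A. g (f a) = a"
    proof
      fix a assume a: "a \<in> A"
      obtain F OS v S where ae: "a = ((F, OS), (v, S))" by (metis prod.collapse)
      have m: "(F, OS) \<in> Mset V k j (r + k - 1) 0" and v: "v \<in> V" and S: "S \<subseteq> Inl -` OS" "card S = k - 1"
        and nc: "\<forall>s\<in>S. \<not> conn F v s" using a ae unfolding A_def by auto
      note fa = fA_mem[OF fV k m v S nc]
      have "insert (insert v S) F - {insert v S} = F" using fa(3) by auto
      moreover have "insert v S - {v} = S" using fa(4) by auto
      moreover have "OS - Inl ` S \<union> Inl ` S = OS" using S by auto
      ultimately show "g (f a) = a" unfolding ae f_def g_def using fa(2) by simp
    qed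
  next
    show "\<forall>b\<in>B. f (g b) = b"
    proof
      fix b assume b: "b \<in> B"
      obtain G OS e where be: "b = ((G, OS), e)" by (metis prod.collapse)
      have m: "(G, OS) \<in> Mset V k (Suc j) r 0" and eG: "e \<in> G" using b be unfolding B_def by auto
      note ga = gA_mem[OF fV k m eG refl]
      have "insert e (G - {e}) = G" using eG by auto
      moreover have "insert (head G OS e) (e - {head G OS e}) = e" using ga(3) by auto
      moreover have "OS \<union> Inl ` (e - {head G OS e}) - Inl ` (e - {head G OS e}) = OS" using ga(6) by auto
      ultimately show "f (g b) = b" unfolding be f_def g_def by simp
    qed
  next
    show "f ` A \<subseteq> B"
    proof
      fix b assume "b \<in> f ` A"
      then obtain a where a: "a \<in> A" "b = f a" by blast
      obtain F OS v S where ae: "a = ((F, OS), (v, S))" by (metis prod.collapse)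
      have m: "(F, OS) \<in> Mset V k j (r + k - 1) 0" and v: "v \<in> V" and S: "S \<subseteq> Inl -` OS" "card S = k - 1"
        and nc: "\<forall>s\<in>S. \<not> conn F v s" using a ae unfolding A_def by auto
      note fa = fA_mem[OF fV k m v S nc]
      show "b \<in> B" unfolding B_def a(2) ae f_def using fa(1) by simp
    qed
  next
    show "g ` B \<subseteq> A"
    proof
      fix a assume "a \<in> g ` B"
      then obtain b where b: "b \<in> B" "a = g b" by blast
      obtain G OS e where be: "b = ((G, OS), e)" by (metis prod.collapse)
      have m: "(G, OS) \<in> Mset V k (Suc j) r 0" and eG: "e \<in> G" using b be unfolding B_def by auto
      note ga = gA_mem[OF fV k m eG refl]
      have "e - {head G OS e} \<subseteq> Inl -` (OS \<union> Inl ` (e - {head G OS e}))" by auto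
      thus "a \<in> A" unfolding A_def b(2) be g_def using ga by simp
    qed
  qed
  have cA: "card A = card (Mset V k j (r + k - 1) 0) * (card V * ((r + k - 2) choose (k - 1)))"
  proof -
    have "card A = (\<Sum>x\<in>Mset V k j (r + k - 1) 0. card {(v, S). v \<in> V \<and> S \<subseteq> Inl -` (snd x) \<and> card S = k - 1 \<and> (\<forall>s\<in>S. \<not> conn (fst x) v s)})"
      unfolding A_def
    proof (rule card_SigmaI)
      show "finite (Mset V k j (r + k - 1) 0)" using finite_Mset[OF fV] .
      show "\<forall>x\<in>Mset V k j (r + k - 1) 0. finite {(v, S). v \<in> V \<and> S \<subseteq> Inl -` (snd x) \<and> card S = k - 1 \<and> (\<forall>s\<in>S. \<not> conn (fst x) v s)}"
      proof
      fix x assume x: "x \<in> Mset V k j (r + k - 1) 0"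
      have "{(v, S). v \<in> V \<and> S \<subseteq> Inl -` (snd x) \<and> card S = k - 1 \<and> (\<forall>s\<in>S. \<not> conn (fst x) v s)}
          \<subseteq> V \<times> Pow (Inl -` (snd x))" by auto
      moreover have "finite (Inl -` (snd x))" using Mset_D(8)[of "fst x" "snd x"] x fV by auto
      ultimately show "finite {(v, S). v \<in> V \<and> S \<subseteq> Inl -` (snd x) \<and> card S = k - 1 \<and> (\<forall>s\<in>S. \<not> conn (fst x) v s)}"
        using fV finite_subset by blast
      qed
    qed
    also have "\<dots> = (\<Sum>x\<in>Mset V k j (r + k - 1) 0. card V * ((r + k - 2) choose (k - 1)))"
    proof (rule sum.cong)
      fix x assume x: "x \<in> Mset V k j (r + k - 1) 0"
      have "r + k - 1 - 1 = r + k - 2" by simp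
      thus "card {(v, S). v \<in> V \<and> S \<subseteq> Inl -` (snd x) \<and> card S = k - 1 \<and> (\<forall>s\<in>S. \<not> conn (fst x) v s)} =
          card V * ((r + k - 2) choose (k - 1))"
        using fibA_card[OF fV, of "fst x" "snd x" k j "r + k - 1"] x by simp
    qed simp
    finally show ?thesis by simp
  qed
  have cB: "card B = Suc j * card (Mset V k (Suc j) r 0)"
  proof -
    have "card B = (\<Sum>x\<in>Mset V k (Suc j) r 0. card (fst x))"
      unfolding B_def
    proof (rule card_SigmaI)
      show "finite (Mset V k (Suc j) r 0)" using finite_Mset[OF fV] .
      show "\<forall>x\<in>Mset V k (Suc j) r 0. finite (fst x)" using Mset_D(7)[of "fst _" "snd _"] fV by auto
    qed
    also have "\<dots> = (\<Sum>x\<in>Mset V k (Suc j) r 0. Suc j)"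
    proof (rule sum.cong)
      fix x assume "x \<in> Mset V k (Suc j) r 0"
      thus "card (fst x) = Suc j" using Mset_D(3)[of "fst x" "snd x" V k "Suc j" r 0] fV by auto
    qed simp
    finally show ?thesis by simp
  qed
  show ?thesis using bij_betw_same_card[OF bij] cA cB by simp
qed

lemma fB_mem:
  assumes fV: "finite V" and k: "k \<ge> 2" and m: "(F, OS) \<in> Mset V k j (r + k) q"
    and S: "S \<subseteq> Inl -` OS" "card S = k"
  shows "(insert S F, (OS - Inl ` S) \<union> {Inr S}) \<in> Mset V k (Suc j) r (Suc q)"
    and "S \<notin> F" and "Inr S \<notin> OS"
proof -
  note D = Mset_D[OF m fV]
  have SV: "S \<subseteq> V" using S D(11) by auto
  have fS: "finite S" using SV fV finite_subset by blast
  obtain s1 s2 where s12: "s1 \<in> S" "s2 \<in> S" "s1 \<noteq> s2"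
  proof -
    have "2 \<le> card S" using S k by simp
    then obtain T where "T \<subseteq> S" "card T = 2" using obtain_subset_with_card_n by metis
    then obtain a b where "T = {a, b}" "a \<noteq> b" by (meson card_2_iff)
    thus ?thesis using that \<open>T \<subseteq> S\<close> by blast
  qed
  have sp: "\<forall>a\<in>S. \<forall>b\<in>S. conn F a b \<longrightarrow> a = b"
    using roots_sep[OF D(4)] S by blast
  show SF: "S \<notin> F"
  proof
    assume "S \<in> F"
    hence "conn F s1 s2" using s12 by (intro conn_edge) auto
    thus False using sp s12 by blast
  qed
  show SO: "Inr S \<notin> OS" using SF D(10) by auto
  have acyc: "\<not> has_cycle (insert S F)" using forest_insert[OF SF] D(2) sp by blast
  have cardG: "card (insert S F) = Suc j" using D(3,7) SF by simp
  have sub: "insert S F \<subseteq> HE V k" using D(1) SV S unfolding HE_def by auto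
  define N where "N = {ob\<in>OS. \<exists>a\<in>S. near F a ob}"
  have N: "N = Inl ` S"
  proof (intro equalityI subsetI)
    fix ob assume "ob \<in> N"
    then obtain a where a: "ob \<in> OS" "a \<in> S" "near F a ob" unfolding N_def by blast
    hence "ob = Inl a" using near_root[OF D(4) _ a(1) a(3)] S by auto
    thus "ob \<in> Inl ` S" using a by auto
  next
    fix ob :: "nat + nat set" assume "ob \<in> Inl ` S"
    then obtain x where x: "x \<in> S" "ob = Inl x" by auto
    hence "ob \<in> OS" "near F x ob" using S by auto
    thus "ob \<in> N" unfolding N_def using x by blast
  qed
  have mm: "mixed V (insert S F) ((OS - N) \<union> {Inr S})"
    by (rule mixed_merge[OF D(4) SF SV _ N_def]) (use sp in \<open>auto simp: sepd_def\<close>)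
  hence mx2: "mixed V (insert S F) ((OS - Inl ` S) \<union> {Inr S})" using N by simp
  have c1: "Inl -` ((OS - Inl ` S) \<union> {Inr S}) = Inl -` OS - S" by auto
  have c2: "card (Inl -` ((OS - Inl ` S) \<union> {Inr S})) = r"
    unfolding c1 using card_Diff_subset[OF fS S(1)] D(5) S(2) by simp
  have c3: "Inr -` ((OS - Inl ` S) \<union> {Inr S}) = insert S (Inr -` OS)" by auto
  have c4: "card (Inr -` ((OS - Inl ` S) \<union> {Inr S})) = Suc q"
    unfolding c3 using SO D(6,9) by simp
  show "(insert S F, (OS - Inl ` S) \<union> {Inr S}) \<in> Mset V k (Suc j) r (Suc q)"
    unfolding Mset_def using acyc cardG sub mx2 c2 c4 by auto
qed

lemma gB_mem:
  assumes fV: "finite V" and k: "k \<ge> 2" and m: "(G, OS) \<in> Mset V k (Suc j) r (Suc q)"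
    and bO: "Inr b \<in> OS"
  shows "(G - {b}, (OS - {Inr b}) \<union> Inl ` b) \<in> Mset V k j (r + k) q"
    and "card b = k" and "b \<in> G" and "OS \<inter> Inl ` b = {}"
proof -
  note D = Mset_D[OF m fV]
  show bG: "b \<in> G" using mixed_Inr_F[OF D(4) bO] .
  have bV: "b \<subseteq> V" and cb: "card b = k" using HE_sub[OF D(1) bG] by auto
  show "card b = k" by (rule cb)
  have fb: "finite b" using bV fV finite_subset by blast
  show dj: "OS \<inter> Inl ` b = {}"
  proof (rule ccontr)
    assume "OS \<inter> Inl ` b \<noteq> {}"
    then obtain a where a: "a \<in> b" "Inl a \<in> OS" by auto
    have "a \<in> V" using a bV by auto
    moreover have "near G a (Inr b)" using a(1) by (auto intro: bexI[of _ a])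
    ultimately have "Inl a = Inr b" using mixed_uniq[OF D(4), of a "Inl a" "Inr b"] a bO by auto
    thus False by simp
  qed
  have mx: "mixed V (G - {b}) ((OS - {Inr b}) \<union> Inl ` b)"
    using mixed_split_edge[OF D(4) bO D(2) bV] .
  have sub: "G - {b} \<subseteq> HE V k" using D(1) by auto
  have acyc: "\<not> has_cycle (G - {b})" using D(2) has_cycle_mono[of "G - {b}" G] by auto
  have cF: "card (G - {b}) = j" using D(3,7) bG by simp
  have i1: "Inl -` ((OS - {Inr b}) \<union> Inl ` b) = Inl -` OS \<union> b" by auto
  have i2: "Inl -` OS \<inter> b = {}" using dj by auto
  have c1: "card (Inl -` ((OS - {Inr b}) \<union> Inl ` b)) = r + k"
    unfolding i1 using card_Un_disjoint[OF D(8) fb i2] cb D(5) by simp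
  have i3: "Inr -` ((OS - {Inr b}) \<union> Inl ` b) = Inr -` OS - {b}" by auto
  have c2: "card (Inr -` ((OS - {Inr b}) \<union> Inl ` b)) = q"
    unfolding i3 using D(6,9) bO by simp
  show "(G - {b}, (OS - {Inr b}) \<union> Inl ` b) \<in> Mset V k j (r + k) q"
    unfolding Mset_def using sub acyc cF mx c1 c2 by auto
qed

lemma countB:
  assumes fV: "finite V" and k: "k \<ge> 2"
  shows "Suc q * card (Mset V k (Suc j) r (Suc q)) =
         card (Mset V k j (r + k) q) * ((r + k) choose k)"
proof -
  define A where "A = Sigma (Mset V k j (r + k) q) (\<lambda>x. {S. S \<subseteq> Inl -` (snd x) \<and> card S = k})"
  define B where "B = Sigma (Mset V k (Suc j) r (Suc q)) (\<lambda>x. Inr -` (snd x))"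
  define f :: "(nat set set \<times> (nat + nat set) set) \<times> nat set \<Rightarrow> _" where
    "f = (\<lambda>((F, OS), S). ((insert S F, (OS - Inl ` S) \<union> {Inr S}), S))"
  define g :: "(nat set set \<times> (nat + nat set) set) \<times> nat set \<Rightarrow> _" where
    "g = (\<lambda>((G, OS), b). ((G - {b}, (OS - {Inr b}) \<union> Inl ` b), b))"
  have bij: "bij_betw f A B"
  proof (rule bij_betw_byWitness[where f' = g])
    show "\<forall>a\<in>A. g (f a) = a"
    proof
      fix a assume a: "a \<in> A"
      obtain F OS S where ae: "a = ((F, OS), S)" by (metis prod.collapse)
      have m: "(F, OS) \<in> Mset V k j (r + k) q" and S: "S \<subseteq> Inl -` OS" "card S = k"
        using a ae unfolding A_def by auto
      note fa = fB_mem[OF fV k m S]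
      have "insert S F - {S} = F" using fa(2) by auto
      moreover have "(OS - Inl ` S) \<union> {Inr S} - {Inr S} \<union> Inl ` S = OS" using S fa(3) by auto
      ultimately show "g (f a) = a" unfolding ae f_def g_def by simp
    qed
  next
    show "\<forall>b\<in>B. f (g b) = b"
    proof
      fix b assume b: "b \<in> B"
      obtain G OS e where be: "b = ((G, OS), e)" by (metis prod.collapse)
      have m: "(G, OS) \<in> Mset V k (Suc j) r (Suc q)" and eO: "Inr e \<in> OS" using b be unfolding B_def by auto
      note ga = gB_mem[OF fV k m eO]
      have "insert e (G - {e}) = G" using ga(3) by auto
      moreover have "(OS - {Inr e}) \<union> Inl ` e - Inl ` e \<union> {Inr e} = OS" using ga(4) eO by auto
      ultimately show "f (g b) = b" unfolding be f_def g_def by simp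
    qed
  next
    show "f ` A \<subseteq> B"
    proof
      fix b assume "b \<in> f ` A"
      then obtain a where a: "a \<in> A" "b = f a" by blast
      obtain F OS S where ae: "a = ((F, OS), S)" by (metis prod.collapse)
      have m: "(F, OS) \<in> Mset V k j (r + k) q" and S: "S \<subseteq> Inl -` OS" "card S = k"
        using a ae unfolding A_def by auto
      note fa = fB_mem[OF fV k m S]
      show "b \<in> B" unfolding B_def a(2) ae f_def using fa(1) by simp
    qed
  next
    show "g ` B \<subseteq> A"
    proof
      fix a assume "a \<in> g ` B"
      then obtain b where b: "b \<in> B" "a = g b" by blast
      obtain G OS e where be: "b = ((G, OS), e)" by (metis prod.collapse)
      have m: "(G, OS) \<in> Mset V k (Suc j) r (Suc q)" and eO: "Inr e \<in> OS" using b be unfolding B_def by auto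
      note ga = gB_mem[OF fV k m eO]
      have "e \<subseteq> Inl -` ((OS - {Inr e}) \<union> Inl ` e)" by auto
      thus "a \<in> A" unfolding A_def b(2) be g_def using ga by simp
    qed
  qed
  have cA: "card A = card (Mset V k j (r + k) q) * ((r + k) choose k)"
  proof -
    have "card A = (\<Sum>x\<in>Mset V k j (r + k) q. card {S. S \<subseteq> Inl -` (snd x) \<and> card S = k})"
      unfolding A_def
    proof (rule card_SigmaI)
      show "finite (Mset V k j (r + k) q)" using finite_Mset[OF fV] .
      show "\<forall>x\<in>Mset V k j (r + k) q. finite {S. S \<subseteq> Inl -` (snd x) \<and> card S = k}"
      proof
        fix x assume x: "x \<in> Mset V k j (r + k) q"
        have "{S. S \<subseteq> Inl -` (snd x) \<and> card S = k} \<subseteq> Pow (Inl -` (snd x))" by auto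
        moreover have "finite (Inl -` (snd x))" using Mset_D(8)[of "fst x" "snd x"] x fV by auto
        ultimately show "finite {S. S \<subseteq> Inl -` (snd x) \<and> card S = k}" using finite_subset by blast
      qed
    qed
    also have "\<dots> = (\<Sum>x\<in>Mset V k j (r + k) q. (r + k) choose k)"
    proof (rule sum.cong)
      fix x assume x: "x \<in> Mset V k j (r + k) q"
      have "finite (Inl -` (snd x))" "card (Inl -` (snd x)) = r + k"
        using Mset_D(5,8)[of "fst x" "snd x"] x fV by auto
      thus "card {S. S \<subseteq> Inl -` (snd x) \<and> card S = k} = (r + k) choose k"
        using n_subsets[of "Inl -` (snd x)" k] by simp
    qed simp
    finally show ?thesis by simp
  qed
  have cB: "card B = Suc q * card (Mset V k (Suc j) r (Suc q))"
  proof -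
    have "card B = (\<Sum>x\<in>Mset V k (Suc j) r (Suc q). card (Inr -` (snd x)))"
      unfolding B_def
    proof (rule card_SigmaI)
      show "finite (Mset V k (Suc j) r (Suc q))" using finite_Mset[OF fV] .
      show "\<forall>x\<in>Mset V k (Suc j) r (Suc q). finite (Inr -` (snd x))"
        using Mset_D(9)[of "fst _" "snd _"] fV by auto
    qed
    also have "\<dots> = (\<Sum>x\<in>Mset V k (Suc j) r (Suc q). Suc q)"
    proof (rule sum.cong)
      fix x assume "x \<in> Mset V k (Suc j) r (Suc q)"
      thus "card (Inr -` (snd x)) = Suc q" using Mset_D(6)[of "fst x" "snd x" V k "Suc j" r "Suc q"] fV by auto
    qed simp
    finally show ?thesis by simp
  qed
  show ?thesis using bij_betw_same_card[OF bij] cA cB by simp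
qed

definition Mf :: "nat \<Rightarrow> nat \<Rightarrow> nat \<Rightarrow> nat \<Rightarrow> nat \<Rightarrow> real" where
  "Mf n k j r q = (if r + q + (k - 1) * j = n \<and> q \<le> j then
     real n ^ (j - q) * fact (n - 1) * real (r + k * q) /
       (fact (k - 1) ^ (j - q) * fact k ^ q * fact q * fact r * fact (j - q)) else 0)"

lemma Mf0: "n \<ge> 1 \<Longrightarrow> Mf n k 0 r q = (if r = n \<and> q = 0 then 1 else 0)"
proof -
  assume n: "n \<ge> 1"
  have fn: "fact n = real n * (fact (n - 1) :: real)" using n by (cases n) auto
  have "fact (n - 1) * real n / fact n = (1::real)" unfolding fn using n by simp
  thus ?thesis unfolding Mf_def by (auto simp: mult.commute)
qed

lemma MfA:
  assumes k: "k \<ge> 2"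
  shows "real (Suc j) * Mf n k (Suc j) r 0 = Mf n k j (r + k - 1) 0 * (real n * real ((r + k - 2) choose (k - 1)))"
proof -
  obtain a where a: "k = Suc a" "a \<ge> 1" using k by (metis Suc_le_D Suc_le_mono one_add_one plus_1_eq_Suc)
  have c: "(r + k - 1 + 0 + (k - 1) * j = n \<and> 0 \<le> j) \<longleftrightarrow> (r + 0 + (k - 1) * Suc j = n \<and> 0 \<le> Suc j)"
    using a by auto
  show ?thesis
  proof (cases "r + 0 + (k - 1) * Suc j = n")
    case False
    thus ?thesis using c unfolding Mf_def by auto
  next
    case True
    show ?thesis
    proof (cases r)
      case 0
      have "(r + k - 2) choose (k - 1) = 0" using 0 a by simp
      thus ?thesis using 0 unfolding Mf_def by simp
    next
      case (Suc r')
      have e1: "r + k - 1 = Suc (r' + a)" "r + k - 2 = r' + a" "k - 1 = a" using Suc a by auto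
      have ch: "real ((r' + a) choose a) = fact (r' + a) / (fact a * fact r')"
        using binomial_fact[of a "r' + a"] by simp
      have cond1: "r + k - 1 + 0 + (k - 1) * j = n" using True a Suc by simp
      have L: "Mf n k (Suc j) r 0 = real n ^ Suc j * fact (n - 1) * real r /
               (fact a ^ Suc j * fact r * fact (Suc j))"
        unfolding Mf_def using True a by simp
      have R: "Mf n k j (r + k - 1) 0 = real n ^ j * fact (n - 1) * real (r + k - 1) /
               (fact a ^ j * fact (r + k - 1) * fact j)"
        unfolding Mf_def using cond1 a by simp
      have gen: "x * (N * Pn * P * rr / (A * Aj * (rr * fr') * (x * fj))) = Pn * P * s / (Aj * (s * fs') * fj) * (N * (fs' / (A * fr')))"
        if "x \<noteq> 0" "A \<noteq> 0" "Aj \<noteq> 0" "rr \<noteq> 0" "fr' \<noteq> 0" "fj \<noteq> 0" "s \<noteq> 0" "fs' \<noteq> 0"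
        for x N Pn P rr A Aj fr' fj s fs' :: real
        using that by (simp add: divide_simps ac_simps)
      have f1: "fact r = real r * (fact r' :: real)" using Suc by (simp add: fact_Suc)
      have f2: "fact (Suc j) = real (Suc j) * (fact j :: real)" by (simp add: fact_Suc)
      have f3: "fact (Suc (r' + a)) = real (Suc (r' + a)) * (fact (r' + a) :: real)" by (simp add: fact_Suc)
      have f4: "real n ^ Suc j = real n * real n ^ j" by simp
      have f5: "(fact a :: real) ^ Suc j = fact a * fact a ^ j" by simp
      show ?thesis
        unfolding L R unfolding e1 ch f1 f2 f3 f4 f5
        by (rule gen) (use Suc in auto)
    qed
  qed
qed

lemma MfB:
  assumes k: "k \<ge> 2"
  shows "real (Suc q) * Mf n k (Suc j) r (Suc q) = Mf n k j (r + k) q * real ((r + k) choose k)"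
proof -
  obtain a where a: "k = Suc a" using k by (cases k) auto
  have c: "(r + Suc q + (k - 1) * Suc j = n \<and> Suc q \<le> Suc j) \<longleftrightarrow> (r + k + q + (k - 1) * j = n \<and> q \<le> j)"
    using a by (simp add: algebra_simps)
  show ?thesis
  proof (cases "r + k + q + (k - 1) * j = n \<and> q \<le> j")
    case False
    thus ?thesis using c unfolding Mf_def by auto
  next
    case True
    have ch: "real ((r + k) choose k) = fact (r + k) / (fact k * fact r)"
      using binomial_fact[of k "r + k"] by simp
    have L: "Mf n k (Suc j) r (Suc q) = real n ^ (j - q) * fact (n - 1) * real (r + k * Suc q) /
       (fact (k - 1) ^ (j - q) * fact k ^ Suc q * fact (Suc q) * fact r * fact (j - q))"
      unfolding Mf_def using True c by simp
    have R: "Mf n k j (r + k) q = real n ^ (j - q) * fact (n - 1) * real (r + k + k * q) /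
       (fact (k - 1) ^ (j - q) * fact k ^ q * fact q * fact (r + k) * fact (j - q))"
      unfolding Mf_def using True by simp
    have e: "r + k * Suc q = r + k + k * q" by simp
    have gen: "x * (P * c / (A * (fk * fkq) * (x * fq) * fr * B)) = P * c / (A * fkq * fq * frk * B) * (frk / (fk * fr))"
      if "x \<noteq> 0" "A \<noteq> 0" "fk \<noteq> 0" "fkq \<noteq> 0" "fq \<noteq> 0" "fr \<noteq> 0" "B \<noteq> 0" "frk \<noteq> 0"
      for x P c A fk fkq fq fr B frk :: real
      using that by (simp add: divide_simps ac_simps)
    have fs: "fact (Suc q) = real (Suc q) * (fact q :: real)" by (simp add: fact_Suc)
    have pw: "(fact k :: real) ^ Suc q = fact k * fact k ^ q" by simp
    show ?thesis unfolding L R ch e fs pw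
      by (rule gen) auto
  qed
qed

lemma Mset_card:
  assumes fV: "finite V" and n: "card V = n" "n \<ge> 1" and k: "k \<ge> 2"
  shows "real (card (Mset V k j r q)) = Mf n k j r q"
  using assms
proof (induction q arbitrary: j r)
  case 0
  show ?case
  proof (induction j arbitrary: r)
    case 0
    show ?case using Mset_0[OF fV, of k r 0] Mf0[OF n(2), of k r 0] n by simp
  next
    case (Suc j)
    have "real (Suc j * card (Mset V k (Suc j) r 0)) =
          real (card (Mset V k j (r + k - 1) 0) * (card V * ((r + k - 2) choose (k - 1))))"
      using countA[OF fV k, of j r] by simp
    hence "real (Suc j) * real (card (Mset V k (Suc j) r 0)) =
           Mf n k j (r + k - 1) 0 * (real n * real ((r + k - 2) choose (k - 1)))"
      using Suc.IH[of "r + k - 1"] n by (simp add: ring_distribs)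
    also have "\<dots> = real (Suc j) * Mf n k (Suc j) r 0" using MfA[OF k] by simp
    finally show ?case by simp
  qed
next
  case (Suc q)
  show ?case
  proof (cases j)
    case 0
    show ?thesis using Mset_0[OF fV, of k r "Suc q"] Mf0[OF n(2), of k r "Suc q"] 0 by simp
  next
    case (Suc j')
    have "real (Suc q * card (Mset V k (Suc j') r (Suc q))) =
          real (card (Mset V k j' (r + k) q) * ((r + k) choose k))"
      using countB[OF fV k, of q j' r] by simp
    hence "real (Suc q) * real (card (Mset V k (Suc j') r (Suc q))) =
           Mf n k j' (r + k) q * real ((r + k) choose k)"
      using Suc.IH[of j' "r + k"] fV n k by (simp add: ring_distribs)
    also have "\<dots> = real (Suc q) * Mf n k (Suc j') r (Suc q)" using MfB[OF k] by simp
    finally show ?thesis using Suc by simp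
  qed
qed

definition cls :: "nat set \<Rightarrow> nat set set \<Rightarrow> nat \<Rightarrow> nat set" where
  "cls V F x = {y \<in> V. conn F x y}"

definition minroots :: "nat set \<Rightarrow> nat set set \<Rightarrow> nat set" where
  "minroots V F = {x \<in> V. \<forall>y\<in>V. conn F x y \<longrightarrow> x \<le> y}"

lemma minroot_ex:
  assumes fV: "finite V" and x: "x \<in> V"
  shows "\<exists>r\<in>minroots V F. conn F x r"
proof -
  define r where "r = Min (cls V F x)"
  have fc: "finite (cls V F x)" using fV unfolding cls_def by auto
  have ne: "x \<in> cls V F x" using x unfolding cls_def by auto
  have r: "r \<in> cls V F x" unfolding r_def using Min_in[OF fc] ne by blast
  have "\<forall>y\<in>V. conn F r y \<longrightarrow> r \<le> y"
  proof (intro ballI impI)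
    fix y assume "y \<in> V" "conn F r y"
    hence "y \<in> cls V F x" using r unfolding cls_def by (auto intro: conn_trans)
    thus "r \<le> y" unfolding r_def using Min_le[OF fc] by blast
  qed
  thus ?thesis using r unfolding minroots_def cls_def by auto
qed

lemma minroot_uniq:
  assumes "r \<in> minroots V F" "r' \<in> minroots V F" "conn F r r'"
  shows "r = r'"
proof -
  have "r \<le> r'" using assms unfolding minroots_def by auto
  moreover have "conn F r' r" using assms(3) by (rule conn_sym)
  hence "r' \<le> r" using assms unfolding minroots_def by auto
  ultimately show ?thesis by simp
qed

lemma minroots_mixed:
  assumes fV: "finite V"
  shows "mixed V F (Inl ` minroots V F)"
  unfolding mixed_def
proof (intro conjI ballI)
  fix ob :: "nat + nat set" assume "ob \<in> Inl ` minroots V F"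
  thus "valid V F ob" unfolding minroots_def by auto
next
  fix x assume x: "x \<in> V"
  obtain r where r: "r \<in> minroots V F" "conn F x r" using minroot_ex[OF fV x] by blast
  show "\<exists>!ob. ob \<in> Inl ` minroots V F \<and> near F x ob"
  proof (rule ex1I[of _ "Inl r"])
    show "Inl r \<in> Inl ` minroots V F \<and> near F x (Inl r)" using r by auto
  next
    fix ob :: "nat + nat set" assume ob: "ob \<in> Inl ` minroots V F \<and> near F x ob"
    then obtain r' where r': "r' \<in> minroots V F" "ob = Inl r'" "conn F x r'" by auto
    have "conn F r r'" using r r' by (meson conn_sym conn_trans)
    thus "ob = Inl r" using minroot_uniq[OF r(1) r'(1)] r' by simp
  qed
qed

lemma card_cls_image:
  assumes fV: "finite V"
  shows "card (cls V F ` V) = card (minroots V F)"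
proof -
  have eq: "cls V F ` V = cls V F ` minroots V F"
  proof (intro equalityI subsetI)
    fix C assume "C \<in> cls V F ` V"
    then obtain x where x: "x \<in> V" "C = cls V F x" by blast
    obtain r where r: "r \<in> minroots V F" "conn F x r" using minroot_ex[OF fV x(1)] by blast
    have "cls V F x = cls V F r" unfolding cls_def using r(2) by (meson conn_sym conn_trans)
    thus "C \<in> cls V F ` minroots V F" using x r by blast
  next
    fix C assume "C \<in> cls V F ` minroots V F"
    thus "C \<in> cls V F ` V" unfolding minroots_def by auto
  qed
  have inj: "inj_on (cls V F) (minroots V F)"
  proof
    fix r r' assume r: "r \<in> minroots V F" "r' \<in> minroots V F" "cls V F r = cls V F r'"
    have "r' \<in> cls V F r'" using r(2) unfolding cls_def minroots_def by auto
    hence "r' \<in> cls V F r" using r(3) by simp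
    hence "conn F r r'" unfolding cls_def by simp
    thus "r = r'" using minroot_uniq r by blast
  qed
  show ?thesis unfolding eq using card_image[OF inj] .
qed

lemma C1:
  assumes fV: "finite V" and k: "k \<ge> 2" and ne: "V \<noteq> {}" and FH: "F \<subseteq> HE V k"
    and fo: "\<not> has_cycle F" and mx: "mixed V F (Inl ` R)"
  shows "card R + (k - 1) * card F = card V"
proof -
  let ?OS = "Inl ` R :: (nat + nat set) set"
  have i1: "Inl -` ?OS = R" by auto
  have i2: "Inr -` ?OS = {}" by auto
  have mem: "(F, ?OS) \<in> Mset V k (card F) (card R) 0"
    unfolding Mset_def using FH fo mx i1 i2 by auto
  have c0: "card (Mset V k (card F) (card R) 0) \<noteq> 0"
    using mem finite_Mset[OF fV] by (metis card_0_eq empty_iff)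
  have "card V \<ge> 1" using fV ne by (simp add: Suc_leI card_gt_0_iff)
  hence "real (card (Mset V k (card F) (card R) 0)) = Mf (card V) k (card F) (card R) 0"
    using Mset_card[OF fV refl _ k, of "card F" "card R" 0] by simp
  hence "Mf (card V) k (card F) (card R) 0 \<noteq> 0" using c0 by simp
  thus ?thesis unfolding Mf_def by (auto split: if_splits)
qed

lemma conn_restrict:
  assumes FH: "F \<subseteq> HE V k" and x0: "x0 \<in> V" and c: "conn F x0 y"
  shows "conn {e \<in> F. e \<subseteq> cls V F x0} x0 y"
  using c unfolding conn_def
proof (induction rule: rtrancl_induct)
  case base show ?case by simp
next
  case (step y z)
  obtain e where e: "e \<in> F" "y \<in> e" "z \<in> e" using step.hyps(2) unfolding adj_def by auto
  have eV: "e \<subseteq> V" using HE_sub[OF FH e(1)] by simp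
  have "e \<subseteq> cls V F x0"
  proof
    fix w assume "w \<in> e"
    hence "conn F y w" using e by (intro conn_edge) auto
    moreover have "conn F x0 y" using step.hyps(1) unfolding conn_def by simp
    ultimately show "w \<in> cls V F x0" unfolding cls_def using eV \<open>w \<in> e\<close> conn_trans by blast
  qed
  hence "(y, z) \<in> adj {e \<in> F. e \<subseteq> cls V F x0}" using e unfolding adj_def by auto
  thus ?case using step.IH by (meson rtrancl.rtrancl_into_rtrancl)
qed

lemma comp_size:
  assumes fV: "finite V" and k: "k \<ge> 2" and FH: "F \<subseteq> HE V k" and fo: "\<not> has_cycle F"
    and x0: "x0 \<in> V"
  shows "card (cls V F x0) = 1 + (k - 1) * card {e \<in> F. e \<subseteq> cls V F x0}"
proof -
  define C where "C = cls V F x0"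
  define FC where "FC = {e \<in> F. e \<subseteq> C}"
  have CV: "C \<subseteq> V" unfolding C_def cls_def by auto
  have fC: "finite C" using CV fV finite_subset by blast
  have x0C: "x0 \<in> C" unfolding C_def cls_def using x0 by auto
  have FCH: "FC \<subseteq> HE C k" unfolding FC_def HE_def using FH HE_sub[OF FH] by auto
  have foC: "\<not> has_cycle FC" using fo has_cycle_mono[of FC F] unfolding FC_def by auto
  have mx: "mixed C FC (Inl ` {x0})"
    unfolding mixed_def
  proof (intro conjI ballI)
    fix ob :: "nat + nat set" assume "ob \<in> Inl ` {x0}" thus "valid C FC ob" using x0C by auto
  next
    fix x assume x: "x \<in> C"
    have "conn FC x0 x" using conn_restrict[OF FH x0] x unfolding FC_def C_def cls_def by auto
    hence "conn FC x x0" by (rule conn_sym)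
    thus "\<exists>!ob. ob \<in> Inl ` {x0} \<and> near FC x ob" by auto
  qed
  have "card {x0} + (k - 1) * card FC = card C"
    using C1[OF fC k _ FCH foC mx] x0C by auto
  hence "card C = 1 + (k - 1) * card FC" by simp
  thus ?thesis unfolding C_def FC_def .
qed

lemma sum_choice:
  fixes X :: "'i \<Rightarrow> 'a set" and w :: "'a \<Rightarrow> real"
  assumes fI: "finite I" and fX: "\<And>i. i \<in> I \<Longrightarrow> finite (X i)"
    and dj: "\<And>i j. i \<in> I \<Longrightarrow> j \<in> I \<Longrightarrow> i \<noteq> j \<Longrightarrow> X i \<inter> X j = {}"
  shows "(\<Sum>OS\<in>{OS. OS \<subseteq> \<Union>(X ` I) \<and> (\<forall>i\<in>I. \<exists>!x. x \<in> OS \<and> x \<in> X i)}. \<Prod>x\<in>OS. w x)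
         = (\<Prod>i\<in>I. \<Sum>x\<in>X i. w x)"
proof -
  let ?T = "{OS. OS \<subseteq> \<Union>(X ` I) \<and> (\<forall>i\<in>I. \<exists>!x. x \<in> OS \<and> x \<in> X i)}"
  have uq: "i = j" if "i \<in> I" "j \<in> I" "x \<in> X i" "x \<in> X j" for i j x
    using dj[OF that(1,2)] that by blast
  have "(\<Prod>i\<in>I. \<Sum>x\<in>X i. w x) = (\<Sum>g\<in>PiE I X. \<Prod>i\<in>I. w (g i))"
    by (rule prod_sum_PiE[OF fI fX])
  also have "\<dots> = (\<Sum>OS\<in>?T. \<Prod>x\<in>OS. w x)"
  proof (rule sum.reindex_bij_witness[where j = "\<lambda>g. g ` I" and i = "\<lambda>OS. restrict (\<lambda>i. THE x. x \<in> OS \<and> x \<in> X i) I"])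
    fix g assume g: "g \<in> PiE I X"
    have the: "(THE x. x \<in> g ` I \<and> x \<in> X i) = g i" if i: "i \<in> I" for i
    proof (rule the_equality)
      show "g i \<in> g ` I \<and> g i \<in> X i" using g i by auto
    next
      fix x assume "x \<in> g ` I \<and> x \<in> X i"
      then obtain i' where "i' \<in> I" "x = g i'" "g i' \<in> X i" by auto
      moreover have "g i' \<in> X i'" using g \<open>i' \<in> I\<close> by auto
      ultimately show "x = g i" using uq[OF i, of i'] by auto
    qed
    show "restrict (\<lambda>i. THE x. x \<in> g ` I \<and> x \<in> X i) I = g"
    proof
      fix i show "restrict (\<lambda>i. THE x. x \<in> g ` I \<and> x \<in> X i) I i = g i"
        using the g by (cases "i \<in> I") (auto simp: PiE_def extensional_def)
    qed
    show "g ` I \<in> ?T"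
      unfolding mem_Collect_eq
    proof (intro conjI ballI)
      show "g ` I \<subseteq> \<Union>(X ` I)" using g by auto
    next
      fix i assume i: "i \<in> I"
      show "\<exists>!x. x \<in> g ` I \<and> x \<in> X i"
      proof (rule ex1I[of _ "g i"])
        show "g i \<in> g ` I \<and> g i \<in> X i" using g i by auto
      next
        fix x assume "x \<in> g ` I \<and> x \<in> X i"
        then obtain i' where "i' \<in> I" "x = g i'" "g i' \<in> X i" by auto
        moreover have "g i' \<in> X i'" using g \<open>i' \<in> I\<close> by auto
        ultimately show "x = g i" using uq[OF i, of i'] by auto
      qed
    qed
    have inj: "inj_on g I"
    proof
      fix i i' assume a: "i \<in> I" "i' \<in> I" "g i = g i'"
      have b: "g i \<in> X i" using g a(1) by auto
      have "g i' \<in> X i'" using g a(2) by auto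
      thus "i = i'" using uq[OF a(1,2) b] a(3) by simp
    qed
    show "(\<Prod>x\<in>g ` I. w x) = (\<Prod>i\<in>I. w (g i))"
      using prod.reindex[OF inj, of w] by simp
  next
    fix OS assume OS: "OS \<in> ?T"
    have the: "(THE x. x \<in> OS \<and> x \<in> X i) \<in> OS \<and> (THE x. x \<in> OS \<and> x \<in> X i) \<in> X i"
      if "i \<in> I" for i
      using theI'[of "\<lambda>x. x \<in> OS \<and> x \<in> X i"] OS that by auto
    show "restrict (\<lambda>i. THE x. x \<in> OS \<and> x \<in> X i) I \<in> PiE I X"
      using the by auto
    show "restrict (\<lambda>i. THE x. x \<in> OS \<and> x \<in> X i) I ` I = OS"
    proof (intro equalityI subsetI)
      fix x assume "x \<in> restrict (\<lambda>i. THE x. x \<in> OS \<and> x \<in> X i) I ` I"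
      thus "x \<in> OS" using the by auto
    next
      fix x assume x: "x \<in> OS"
      then obtain i where i: "i \<in> I" "x \<in> X i" using OS by blast
      have "(THE x. x \<in> OS \<and> x \<in> X i) = x"
        using the1_equality[of "\<lambda>x. x \<in> OS \<and> x \<in> X i" x] OS i x by auto
      thus "x \<in> restrict (\<lambda>i. THE x. x \<in> OS \<and> x \<in> X i) I ` I" using i by force
    qed
  qed
  finally show ?thesis by simp
qed

definition wt :: "nat \<Rightarrow> nat + nat set \<Rightarrow> real" where
  "wt k ob = (case ob of Inl _ \<Rightarrow> 1 | Inr _ \<Rightarrow> 1 - real k)"

lemma prod_wt: "finite OS \<Longrightarrow> (\<Prod>ob\<in>OS. wt k ob) = (1 - real k) ^ card (Inr -` OS)"
proof (induction OS rule: finite_induct)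
  case empty show ?case by simp
next
  case (insert x OS)
  have fin: "finite (Inr -` OS)" using insert(1) by (rule finite_vimageI) simp
  show ?case
  proof (cases x)
    case (Inl a)
    have "Inr -` insert x OS = Inr -` OS" using Inl by auto
    thus ?thesis using insert Inl by (simp add: wt_def)
  next
    case (Inr b)
    have e: "Inr -` insert x OS = insert b (Inr -` OS)" using Inr by auto
    have "b \<notin> Inr -` OS" using insert(2) Inr by auto
    hence "card (Inr -` insert x OS) = Suc (card (Inr -` OS))" unfolding e using fin by simp
    thus ?thesis using insert Inr by (simp add: wt_def)
  qed
qed

lemma cls_self: "x \<in> V \<Longrightarrow> x \<in> cls V F x"
  unfolding cls_def by simp

lemma cls_eq: "y \<in> cls V F x \<Longrightarrow> cls V F y = cls V F x"
  unfolding cls_def by (auto intro: conn_trans conn_sym)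

lemma W1:
  assumes fV: "finite V" and k: "k \<ge> 2" and FH: "F \<subseteq> HE V k" and fo: "\<not> has_cycle F"
  shows "(\<Sum>OS\<in>{OS. mixed V F OS}. \<Prod>ob\<in>OS. wt k ob) = 1"
proof -
  define I where "I = cls V F ` V"
  define X where "X = (\<lambda>C. Inl ` C \<union> Inr ` {e \<in> F. e \<subseteq> C})"
  have fF: "finite F" using FH finite_HE[OF fV] finite_subset by blast
  have edge: "b \<subseteq> cls V F y" if "b \<in> F" "y \<in> b" for b y
  proof
    fix z assume "z \<in> b"
    thus "z \<in> cls V F y" unfolding cls_def using HE_sub[OF FH that(1)] that conn_edge by blast
  qed
  have bne: "b \<noteq> {}" if "b \<in> F" for b using HE_sub[OF FH that] k by auto
  have valid_iff: "valid V F ob \<longleftrightarrow> ob \<in> \<Union>(X ` I)" for ob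
  proof (cases ob)
    case (Inl a)
    have "a \<in> V \<longleftrightarrow> (\<exists>x\<in>V. a \<in> cls V F x)"
    proof
      assume "a \<in> V" thus "\<exists>x\<in>V. a \<in> cls V F x" using cls_self by blast
    next
      assume "\<exists>x\<in>V. a \<in> cls V F x" thus "a \<in> V" unfolding cls_def by auto
    qed
    thus ?thesis using Inl unfolding X_def I_def by auto
  next
    case (Inr b)
    have "b \<in> F \<longleftrightarrow> (\<exists>x\<in>V. b \<in> F \<and> b \<subseteq> cls V F x)"
    proof
      assume b: "b \<in> F"
      then obtain y where "y \<in> b" using bne by blast
      moreover hence "y \<in> V" using HE_sub[OF FH b] by auto
      ultimately show "\<exists>x\<in>V. b \<in> F \<and> b \<subseteq> cls V F x" using edge b by blast
    qed auto
    thus ?thesis using Inr unfolding X_def I_def by auto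
  qed
  have near_iff: "near F x ob \<longleftrightarrow> ob \<in> X (cls V F x)" if x: "x \<in> V" and v: "valid V F ob" for x ob
  proof (cases ob)
    case (Inl a)
    thus ?thesis using v unfolding X_def cls_def by auto
  next
    case (Inr b)
    have bF: "b \<in> F" using v Inr by simp
    have "(\<exists>y\<in>b. conn F x y) \<longleftrightarrow> b \<subseteq> cls V F x"
    proof
      assume "\<exists>y\<in>b. conn F x y"
      then obtain y where y: "y \<in> b" "conn F x y" by blast
      have "y \<in> cls V F x" using y HE_sub[OF FH bF] unfolding cls_def by auto
      thus "b \<subseteq> cls V F x" using edge[OF bF y(1)] cls_eq by blast
    next
      assume "b \<subseteq> cls V F x"
      moreover obtain y where "y \<in> b" using bne[OF bF] by blast
      ultimately show "\<exists>y\<in>b. conn F x y" unfolding cls_def by auto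
    qed
    thus ?thesis using Inr bF unfolding X_def by auto
  qed
  have set_eq: "{OS. mixed V F OS} = {OS. OS \<subseteq> \<Union>(X ` I) \<and> (\<forall>C\<in>I. \<exists>!ob. ob \<in> OS \<and> ob \<in> X C)}"
  proof (intro equalityI subsetI)
    fix OS assume "OS \<in> {OS. mixed V F OS}"
    hence m: "mixed V F OS" by simp
    have vOS: "\<And>ob. ob \<in> OS \<Longrightarrow> valid V F ob" using m unfolding mixed_def by auto
    have "OS \<subseteq> \<Union>(X ` I)" using vOS valid_iff by blast
    moreover have "\<forall>C\<in>I. \<exists>!ob. ob \<in> OS \<and> ob \<in> X C"
    proof
      fix C assume "C \<in> I"
      then obtain x where x: "x \<in> V" "C = cls V F x" unfolding I_def by blast
      have "\<exists>!ob. ob \<in> OS \<and> near F x ob" using m x unfolding mixed_def by auto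
      moreover have "\<And>ob. ob \<in> OS \<Longrightarrow> near F x ob \<longleftrightarrow> ob \<in> X C" using near_iff[OF x(1)] vOS x(2) by blast
      ultimately show "\<exists>!ob. ob \<in> OS \<and> ob \<in> X C" by metis
    qed
    ultimately show "OS \<in> {OS. OS \<subseteq> \<Union>(X ` I) \<and> (\<forall>C\<in>I. \<exists>!ob. ob \<in> OS \<and> ob \<in> X C)}" by simp
  next
    fix OS assume "OS \<in> {OS. OS \<subseteq> \<Union>(X ` I) \<and> (\<forall>C\<in>I. \<exists>!ob. ob \<in> OS \<and> ob \<in> X C)}"
    hence a: "OS \<subseteq> \<Union>(X ` I)" "\<forall>C\<in>I. \<exists>!ob. ob \<in> OS \<and> ob \<in> X C" by auto
    have vOS: "\<And>ob. ob \<in> OS \<Longrightarrow> valid V F ob" using a(1) valid_iff by blast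
    have "\<forall>x\<in>V. \<exists>!ob. ob \<in> OS \<and> near F x ob"
    proof
      fix x assume x: "x \<in> V"
      have "cls V F x \<in> I" unfolding I_def using x by blast
      hence "\<exists>!ob. ob \<in> OS \<and> ob \<in> X (cls V F x)" using a(2) by blast
      moreover have "\<And>ob. ob \<in> OS \<Longrightarrow> near F x ob \<longleftrightarrow> ob \<in> X (cls V F x)" using near_iff[OF x] vOS by blast
      ultimately show "\<exists>!ob. ob \<in> OS \<and> near F x ob" by metis
    qed
    thus "OS \<in> {OS. mixed V F OS}" using vOS unfolding mixed_def by auto
  qed
  have fI: "finite I" unfolding I_def using fV by simp
  have fX: "finite (X C)" if "C \<in> I" for C
  proof -
    have "C \<subseteq> V" using that unfolding I_def cls_def by auto
    hence "finite C" using fV finite_subset by blast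
    moreover have "finite {e \<in> F. e \<subseteq> C}" using fF by simp
    ultimately show ?thesis unfolding X_def by simp
  qed
  have djX: "X C \<inter> X C' = {}" if CI: "C \<in> I" "C' \<in> I" "C \<noteq> C'" for C C'
  proof (rule ccontr)
    assume "X C \<inter> X C' \<noteq> {}"
    then obtain ob where ob: "ob \<in> X C" "ob \<in> X C'" by blast
    obtain x where x: "x \<in> V" "C = cls V F x" using CI(1) unfolding I_def by blast
    obtain x' where x': "x' \<in> V" "C' = cls V F x'" using CI(2) unfolding I_def by blast
    obtain a where "a \<in> C" "a \<in> C'"
    proof (cases ob)
      case (Inl a) thus ?thesis using ob that unfolding X_def by auto
    next
      case (Inr b)
      hence "b \<in> F" "b \<subseteq> C" "b \<subseteq> C'" using ob unfolding X_def by auto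
      moreover obtain y where "y \<in> b" using bne calculation(1) by blast
      ultimately show ?thesis using that by blast
    qed
    hence "C = C'" using x x' cls_eq by metis
    thus False using CI(3) by simp
  qed
  have "(\<Sum>OS\<in>{OS. mixed V F OS}. \<Prod>ob\<in>OS. wt k ob) = (\<Prod>C\<in>I. \<Sum>ob\<in>X C. wt k ob)"
    unfolding set_eq by (rule sum_choice[OF fI fX djX])
  also have "\<dots> = (\<Prod>C\<in>I. 1)"
  proof (rule prod.cong)
    fix C assume C: "C \<in> I"
    then obtain x0 where x0: "x0 \<in> V" "C = cls V F x0" unfolding I_def by blast
    have CV: "C \<subseteq> V" using C unfolding I_def cls_def by auto
    have fC: "finite C" using CV fV finite_subset by blast
    have fFC: "finite {e \<in> F. e \<subseteq> C}" using fF by simp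
    have d: "Inl ` C \<inter> Inr ` {e \<in> F. e \<subseteq> C} = {}" by auto
    have "(\<Sum>ob\<in>X C. wt k ob) = (\<Sum>ob\<in>Inl ` C. wt k ob) + (\<Sum>ob\<in>Inr ` {e \<in> F. e \<subseteq> C}. wt k ob)"
      unfolding X_def using sum.union_disjoint[OF _ _ d] fC fFC by simp
    also have "(\<Sum>ob\<in>Inl ` C. wt k ob) = real (card C)"
      by (subst sum.reindex) (auto simp: wt_def inj_on_def)
    also have "(\<Sum>ob\<in>Inr ` {e \<in> F. e \<subseteq> C}. wt k ob) = real (card {e \<in> F. e \<subseteq> C}) * (1 - real k)"
      by (subst sum.reindex) (auto simp: wt_def inj_on_def)
    also have "card C = 1 + (k - 1) * card {e \<in> F. e \<subseteq> C}"
      using comp_size[OF fV k FH fo x0(1)] x0(2) by simp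
    finally show "(\<Sum>ob\<in>X C. wt k ob) = 1" using k by (simp add: of_nat_diff algebra_simps)
  qed simp
  finally show ?thesis by simp
qed

lemma hyperedges_HE: "hyperedges n k = HE {1..n} k" unfolding hyperedges_def HE_def by simp

lemma components_cls: "components n F = cls {1..n} F ` {1..n}"
  unfolding components_def cls_def conn_def by simp

lemma comp_card:
  assumes n: "n \<ge> 1" and k: "k \<ge> 2" and FH: "F \<subseteq> HE {1..n} k" and fo: "\<not> has_cycle F"
  shows "card (components n F) + (k - 1) * card F = n"
proof -
  have "card (components n F) = card (minroots {1..n} F)"
    unfolding components_cls using card_cls_image[of "{1..n}" F] by simp
  moreover have "card (minroots {1..n} F) + (k - 1) * card F = card {1..n}"
    by (rule C1[OF _ k _ FH fo minroots_mixed]) (use n in auto)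
  ultimately show ?thesis by simp
qed

lemma count_m:
  assumes n: "n \<ge> 1" and k: "k \<ge> 2" and p: "p \<le> n" and pm: "p + (k - 1) * m = n"
  shows "real (card {F. F \<subseteq> HE {1..n} k \<and> \<not> has_cycle F \<and> card F = m}) =
         (\<Sum>q\<in>{..m}. \<Sum>r\<in>{..n}. Mf n k m r q * (1 - real k) ^ q)"
proof -
  define V where "V = {1..n::nat}"
  have fV: "finite V" and cV: "card V = n" unfolding V_def by auto
  define Fm where "Fm = {F. F \<subseteq> HE V k \<and> \<not> has_cycle F \<and> card F = m}"
  define MR where "MR = (\<lambda>F. {OS. mixed V F OS})"
  have fFm: "finite Fm" unfolding Fm_def using finite_HE[OF fV] by (simp add: finite_subset)
  have subMR: "OS \<subseteq> Inl ` V \<union> Inr ` F" if "OS \<in> MR F" for F OS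
  proof
    fix ob assume ob: "ob \<in> OS"
    have "valid V F ob" using that ob unfolding MR_def mixed_def by auto
    thus "ob \<in> Inl ` V \<union> Inr ` F" by (cases ob) auto
  qed
  have fOS: "finite OS" if "F \<in> Fm" "OS \<in> MR F" for F OS
  proof -
    have "finite F" using that finite_HE[OF fV] finite_subset unfolding Fm_def by blast
    thus ?thesis using subMR[OF that(2)] fV finite_subset by blast
  qed
  have fMR: "finite (MR F)" if "F \<in> Fm" for F
  proof -
    have "finite F" using that finite_HE[OF fV] finite_subset unfolding Fm_def by blast
    moreover have "MR F \<subseteq> Pow (Inl ` V \<union> Inr ` F)"
    proof
      fix OS assume "OS \<in> MR F"
      hence "\<forall>ob\<in>OS. valid V F ob" unfolding MR_def mixed_def by auto
      have "ob \<in> Inl ` V \<union> Inr ` F" if "ob \<in> OS" for ob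
        using \<open>\<forall>ob\<in>OS. valid V F ob\<close> that by (cases ob) auto
      thus "OS \<in> Pow (Inl ` V \<union> Inr ` F)" by auto
    qed
    ultimately show ?thesis using fV finite_subset by blast
  qed
  have "real (card Fm) = (\<Sum>F\<in>Fm. 1)" by simp
  also have "\<dots> = (\<Sum>F\<in>Fm. \<Sum>OS\<in>MR F. \<Prod>ob\<in>OS. wt k ob)"
  proof (rule sum.cong)
    fix F assume "F \<in> Fm"
    thus "1 = (\<Sum>OS\<in>MR F. \<Prod>ob\<in>OS. wt k ob)" unfolding MR_def Fm_def
      using W1[OF fV k] by auto
  qed simp
  also have "\<dots> = (\<Sum>x\<in>Sigma Fm MR. \<Prod>ob\<in>snd x. wt k ob)"
    using sum.Sigma[OF fFm, of MR "\<lambda>F OS. \<Prod>ob\<in>OS. wt k ob"] fMR by (simp add: case_prod_beta)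
  also have "\<dots> = (\<Sum>x\<in>Sigma Fm MR. (1 - real k) ^ card (Inr -` snd x))"
  proof (rule sum.cong)
    fix x assume "x \<in> Sigma Fm MR"
    hence "finite (snd x)" using fOS by auto
    thus "(\<Prod>ob\<in>snd x. wt k ob) = (1 - real k) ^ card (Inr -` snd x)" by (rule prod_wt)
  qed simp
  also have "Sigma Fm MR = (\<Union>(q, r)\<in>{..m} \<times> {..n}. Mset V k m r q)"
  proof (intro equalityI subsetI)
    fix x assume x: "x \<in> Sigma Fm MR"
    obtain F OS where xe: "x = (F, OS)" by (cases x)
    have F: "F \<subseteq> HE V k" "\<not> has_cycle F" "card F = m" and mx: "mixed V F OS"
      using x xe unfolding Fm_def MR_def by auto
    have fF: "finite F" using F(1) finite_HE[OF fV] finite_subset by blast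
    have "Inl -` OS \<subseteq> V" using mixed_Inl_V[OF mx] by auto
    hence r: "card (Inl -` OS) \<le> n" using card_mono[OF fV] cV by metis
    have "Inr -` OS \<subseteq> F" using mixed_Inr_F[OF mx] by auto
    hence q: "card (Inr -` OS) \<le> m" using card_mono[OF fF] F(3) by metis
    have "x \<in> Mset V k m (card (Inl -` OS)) (card (Inr -` OS))"
      unfolding Mset_def xe using F mx by auto
    thus "x \<in> (\<Union>(q, r)\<in>{..m} \<times> {..n}. Mset V k m r q)" using r q by blast
  next
    fix x assume "x \<in> (\<Union>(q, r)\<in>{..m} \<times> {..n}. Mset V k m r q)"
    thus "x \<in> Sigma Fm MR" unfolding Mset_def Fm_def MR_def by auto
  qed
  also have "(\<Sum>x\<in>(\<Union>(q, r)\<in>{..m} \<times> {..n}. Mset V k m r q). (1 - real k) ^ card (Inr -` snd x)) =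
      (\<Sum>(q, r)\<in>{..m} \<times> {..n}. \<Sum>x\<in>Mset V k m r q. (1 - real k) ^ card (Inr -` snd x))"
  proof -
    have p1: "finite ({..m} \<times> {..n})" by simp
    have p2: "\<forall>i\<in>{..m} \<times> {..n}. finite ((\<lambda>(q, r). Mset V k m r q) i)"
      using finite_Mset[OF fV] by auto
    have p3: "\<forall>i\<in>{..m} \<times> {..n}. \<forall>j\<in>{..m} \<times> {..n}. i \<noteq> j \<longrightarrow>
      (\<lambda>(q, r). Mset V k m r q) i \<inter> (\<lambda>(q, r). Mset V k m r q) j = {}"
      unfolding Mset_def by auto
    show ?thesis using sum.UNION_disjoint[OF p1 p2 p3, of "\<lambda>x. (1 - real k) ^ card (Inr -` snd x)"]
      by (simp add: case_prod_unfold)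
  qed
  also have "\<dots> = (\<Sum>(q, r)\<in>{..m} \<times> {..n}. Mf n k m r q * (1 - real k) ^ q)"
  proof (rule sum.cong)
    fix y assume "y \<in> {..m} \<times> {..n}"
    obtain q r where y: "y = (q, r)" by (cases y)
    have "(\<Sum>x\<in>Mset V k m r q. (1 - real k) ^ card (Inr -` snd x)) = (\<Sum>x\<in>Mset V k m r q. (1 - real k) ^ q)"
      by (rule sum.cong) (auto simp: Mset_def)
    also have "\<dots> = real (card (Mset V k m r q)) * (1 - real k) ^ q" by simp
    also have "\<dots> = Mf n k m r q * (1 - real k) ^ q" using Mset_card[OF fV cV n k] by simp
    finally show "(case y of (q, r) \<Rightarrow> \<Sum>x\<in>Mset V k m r q. (1 - real k) ^ card (Inr -` snd x)) =
        (case y of (q, r) \<Rightarrow> Mf n k m r q * (1 - real k) ^ q)" using y by simp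
  qed simp
  also have "\<dots> = (\<Sum>q\<in>{..m}. \<Sum>r\<in>{..n}. Mf n k m r q * (1 - real k) ^ q)"
    by (rule sum.cartesian_product[symmetric])
  finally show ?thesis unfolding Fm_def V_def .
qed

lemma term_eq:
  assumes n: "n \<ge> 1" and k: "k \<ge> 2" and qp: "q \<le> p" and qm: "q \<le> m" and pm: "p + (k - 1) * m = n"
  shows "fact (n - 1) / fact p * (real n / fact (k - 1)) ^ m *
           (real (p choose q) * real (p + (k - 1) * q) * (1 / fact (m - q)) *
            ((1 - real k) / (real k * real n)) ^ q)
         = Mf n k m (p - q) q * (1 - real k) ^ q"
proof -
  have gen: "P / pf * ((A * B) / (D * E)) * ((pf / (Q * R)) * c * (1 / S) * (z / (K * B)))
      = A * P * c / (D * (K * E) * Q * R * S) * z"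
    if "pf \<noteq> 0" "B \<noteq> 0" "D \<noteq> 0" "E \<noteq> 0" "Q \<noteq> 0" "R \<noteq> 0" "S \<noteq> 0" "K \<noteq> 0"
    for P pf A B D E Q R c S z K :: real
    using that by (simp add: divide_simps ac_simps)
  have mq: "m = (m - q) + q" using qm by simp
  have h1: "(real n / fact (k - 1)) ^ m = (real n ^ (m - q) * real n ^ q) / (fact (k - 1) ^ (m - q) * fact (k - 1) ^ q)"
    by (subst mq) (simp add: power_divide power_add)
  have h2: "((1 - real k) / (real k * real n)) ^ q = (1 - real k) ^ q / (real k ^ q * real n ^ q)"
    by (simp add: power_divide power_mult_distrib)
  have h3: "real (p choose q) = fact p / (fact q * fact (p - q))"
    using binomial_fact[OF qp] by simp
  have fk: "(fact k :: real) = real k * fact (k - 1)" using k by (cases k) auto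
  have h4: "(fact k :: real) ^ q = real k ^ q * fact (k - 1) ^ q" unfolding fk by (simp add: power_mult_distrib)
  have h5: "p - q + k * q = p + (k - 1) * q"
  proof -
    have "k * q = q + (k - 1) * q" using k by (cases k) auto
    thus ?thesis using qp by simp
  qed
  have cond: "p - q + q + (k - 1) * m = n \<and> q \<le> m" using qp qm pm by simp
  have hMf: "Mf n k m (p - q) q = real n ^ (m - q) * fact (n - 1) * real (p + (k - 1) * q) /
      (fact (k - 1) ^ (m - q) * (real k ^ q * fact (k - 1) ^ q) * fact q * fact (p - q) * fact (m - q))"
    unfolding Mf_def using cond h4 h5 by simp
  show ?thesis unfolding hMf h1 h2 h3
    by (rule gen) (use n k in auto)
qed

theorem mainTheorem10:
  fixes n p k :: nat
  assumes "k \<ge> 2" and "n \<ge> 1" and "1 \<le> p" and "p \<le> n"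
  shows "(\<not> (k - 1) dvd (n - p) \<longrightarrow> u n p k = 0) \<and>
         ((k - 1) dvd (n - p) \<longrightarrow>
           (let m = (n - p) div (k - 1) in
             real (u n p k) =
               fact (n - 1) / fact p * (real n / fact (k - 1)) ^ m *
               (\<Sum>q = 0..p. real (p choose q) * real (p + (k - 1) * q) *
                  (if q \<le> m then 1 / fact (m - q) else 0) *
                  ((1 - real k) / (real k * real n)) ^ q)))"
proof -
  note k = assms(1) and n = assms(2) and p1 = assms(3) and pn = assms(4)
  have uu: "u n p k = card {F. F \<subseteq> HE {1..n} k \<and> \<not> has_cycle F \<and> card (components n F) = p}"
    unfolding u_def spanning_hyperforests_def hyperedges_HE by simp
  have cc: "card (components n F) + (k - 1) * card F = n" if "F \<subseteq> HE {1..n} k" "\<not> has_cycle F" for F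
    using comp_card[OF n k that] .
  show ?thesis
  proof (intro conjI impI)
    assume nd: "\<not> (k - 1) dvd (n - p)"
    have e: "{F. F \<subseteq> HE {1..n} k \<and> \<not> has_cycle F \<and> card (components n F) = p} = {}"
    proof (rule ccontr)
      assume "{F. F \<subseteq> HE {1..n} k \<and> \<not> has_cycle F \<and> card (components n F) = p} \<noteq> {}"
      then obtain F where F: "F \<subseteq> HE {1..n} k" "\<not> has_cycle F" "card (components n F) = p" by blast
      have "p + (k - 1) * card F = n" using cc[OF F(1,2)] F(3) by simp
      hence "n - p = (k - 1) * card F" by simp
      thus False using nd by simp
    qed
    show "u n p k = 0" unfolding uu e by simp
  next
    assume dv: "(k - 1) dvd (n - p)"
    define m where "m = (n - p) div (k - 1)"
    have km: "(k - 1) * m = n - p" unfolding m_def using dv by simp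
    have pm: "p + (k - 1) * m = n" using km pn by simp
    have mn: "m \<le> n"
    proof -
      have "1 \<le> k - 1" using k by simp
      hence "1 * m \<le> (k - 1) * m" by (rule mult_right_mono) simp
      hence "m \<le> (k - 1) * m" by simp
      thus ?thesis using pm by linarith
    qed
    have seteq: "{F. F \<subseteq> HE {1..n} k \<and> \<not> has_cycle F \<and> card (components n F) = p} =
                 {F. F \<subseteq> HE {1..n} k \<and> \<not> has_cycle F \<and> card F = m}"
    proof (intro equalityI subsetI)
      fix F assume "F \<in> {F. F \<subseteq> HE {1..n} k \<and> \<not> has_cycle F \<and> card (components n F) = p}"
      hence F: "F \<subseteq> HE {1..n} k" "\<not> has_cycle F" "card (components n F) = p" by auto
      have a: "p + (k - 1) * card F = n" using cc[OF F(1,2)] F(3) by simp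
      have "(k - 1) * card F = (k - 1) * m" using a pm by linarith
      moreover have "k - 1 \<noteq> 0" using k by simp
      ultimately have "card F = m" by simp
      thus "F \<in> {F. F \<subseteq> HE {1..n} k \<and> \<not> has_cycle F \<and> card F = m}" using F by simp
    next
      fix F assume "F \<in> {F. F \<subseteq> HE {1..n} k \<and> \<not> has_cycle F \<and> card F = m}"
      hence F: "F \<subseteq> HE {1..n} k" "\<not> has_cycle F" "card F = m" by auto
      have "card (components n F) = p" using cc[OF F(1,2)] F(3) pm by simp
      thus "F \<in> {F. F \<subseteq> HE {1..n} k \<and> \<not> has_cycle F \<and> card (components n F) = p}" using F by simp
    qed
    define G where "G = (\<lambda>q. if q \<le> p \<and> q \<le> m then Mf n k m (p - q) q * (1 - real k) ^ q else 0)"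
    have inner: "(\<Sum>r\<in>{..n}. Mf n k m r q * (1 - real k) ^ q) = G q" for q
    proof -
      have "Mf n k m r q * (1 - real k) ^ q = (if r = p - q then G q else 0)" for r
      proof (cases "r + q + (k - 1) * m = n \<and> q \<le> m")
        case True
        hence "r + q = p" using pm by simp
        hence "r = p - q" "q \<le> p" by auto
        thus ?thesis unfolding G_def using True by simp
      next
        case False
        hence "Mf n k m r q = 0" unfolding Mf_def by (rule if_not_P)
        moreover have "r = p - q \<Longrightarrow> q \<le> p \<Longrightarrow> q \<le> m \<Longrightarrow> False" using False pm by simp
        ultimately show ?thesis unfolding G_def by auto
      qed
      hence "(\<Sum>r\<in>{..n}. Mf n k m r q * (1 - real k) ^ q) = (\<Sum>r\<in>{..n}. if r = p - q then G q else 0)"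
        by simp
      also have "\<dots> = G q"
      proof -
        have "p - q \<in> {..n}" using pn by simp
        thus ?thesis by (simp add: sum.delta')
      qed
      finally show ?thesis .
    qed
    have "real (u n p k) = (\<Sum>q\<in>{..m}. \<Sum>r\<in>{..n}. Mf n k m r q * (1 - real k) ^ q)"
      unfolding uu seteq using count_m[OF n k pn pm] .
    also have "\<dots> = (\<Sum>q\<in>{..m}. G q)" using inner by simp
    also have "\<dots> = (\<Sum>q\<in>{..n}. G q)"
      by (rule sum.mono_neutral_left) (use mn in \<open>auto simp: G_def\<close>)
    also have "\<dots> = (\<Sum>q\<in>{0..p}. G q)"
      by (rule sum.mono_neutral_right) (use pn in \<open>auto simp: G_def\<close>)
    also have "\<dots> = (\<Sum>q\<in>{0..p}. fact (n - 1) / fact p * (real n / fact (k - 1)) ^ m *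
               (real (p choose q) * real (p + (k - 1) * q) *
                  (if q \<le> m then 1 / fact (m - q) else 0) *
                  ((1 - real k) / (real k * real n)) ^ q))"
    proof (rule sum.cong)
      fix q assume q: "q \<in> {0..p}"
      show "G q = fact (n - 1) / fact p * (real n / fact (k - 1)) ^ m *
               (real (p choose q) * real (p + (k - 1) * q) *
                  (if q \<le> m then 1 / fact (m - q) else 0) *
                  ((1 - real k) / (real k * real n)) ^ q)"
      proof (cases "q \<le> m")
        case True
        thus ?thesis unfolding G_def using term_eq[OF n k _ True pm] q by simp
      next
        case False
        thus ?thesis unfolding G_def by simp
      qed
    qed simp
    also have "\<dots> = fact (n - 1) / fact p * (real n / fact (k - 1)) ^ m *
               (\<Sum>q = 0..p. real (p choose q) * real (p + (k - 1) * q) *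
                  (if q \<le> m then 1 / fact (m - q) else 0) *
                  ((1 - real k) / (real k * real n)) ^ q)"
      by (simp add: sum_distrib_left)
    finally show "let m = (n - p) div (k - 1) in
             real (u n p k) =
               fact (n - 1) / fact p * (real n / fact (k - 1)) ^ m *
               (\<Sum>q = 0..p. real (p choose q) * real (p + (k - 1) * q) *
                  (if q \<le> m then 1 / fact (m - q) else 0) *
                  ((1 - real k) / (real k * real n)) ^ q)"
      unfolding m_def Let_def .
  qed
qed

end
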